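(* Let $G$ be an $n$-vertex (unweighted, undirected) graph with density $c:=|E(G)|/n^2$. Let $0<\varepsilon_0<1$, and suppose $G$ has an $\varepsilon$-regular $k$-partition $\mathcal{P}=(V_1,\dots,V_k)$ with $\frac1k\le\frac{c}{10}\cdot\frac{\varepsilon_0}{1+\varepsilon_0}$ and $\varepsilon\le(1/k)^{8k^2}$. Then $d_{\mathrm{opt}}(G,G_{/\mathcal{P}})\le\varepsilon_0$.
   Context: Graphs (and weighted graphs) are structures over the signature with one binary symbol $e$: for a graph $G$, $w_G(u,v)=e^{G}(u,v)=1$ if $uv\in E(G)$ and $0$ otherwise; for $U,V\subseteq V(G)$, $w_G(U,V)=\sum_{u\in U}\sum_{v\in V}w_G(u,v)$. For such structures, $\mathrm{opt}(G,H)=\max_{h\colon V(G)\to V(H)}\sum_{(u,v)}w_G(u,v)w_H(h(u),h(v))$ (sum over ordered pairs, maximum over all maps), and $d_{\mathrm{opt}}(G,H)=\sup_{C}|\ln\mathrm{opt}(G,C)-\ln\mathrm{opt}(H,C)|$ over all $\mathbb{Q}_{\ge0}$-weighted structures $C$ on this signature ($\ln0=-\infty$, $|\ln0-\ln0|=0$). A bipartite graph $(V_1,V_2,E)$ with density $d=w(V_1,V_2)/(|V_1||V_2|)$ is $\varepsilon$-homogeneous if for all $W_1\subseteq V_1$, $W_2\subseteq V_2$: $|w(W_1,W_2)-d|W_1||W_2||\le\varepsilon|V_1||V_2|$. An $\varepsilon$-regular $k$-partition of an $n$-vertex graph $G$ is a partition $V_1,\dots,V_k$ of $V(G)$ with $|V_i|\in\{\lfloor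 n/k\rfloor,\lceil n/k\rceil\}$ such that for all $i\ne j$ the bipartite graph between $V_i$ and $V_j$ (with the edges of $G$ between them) is $\varepsilon$-homogeneous. The quotient graph $G_{/\mathcal{P}}$ is the weighted graph on vertex set $[k]$ with weights $w_{G_{/\mathcal{P}}}(i,j)=w_G(V_i,V_j)$ for all $(i,j)\in[k]^2$. *)

theory Defs
  imports "HOL-Analysis.Analysis"
begin

definition is_graph :: "'a set \<Rightarrow> ('a \<Rightarrow> 'a \<Rightarrow> bool) \<Rightarrow> bool" where
  "is_graph V E \<longleftrightarrow> finite V \<and> (\<forall>u v. E u v \<longrightarrow> u \<in> V \<and> v \<in> V) \<and>
      (\<forall>u v. E u v \<longrightarrow> E v u) \<and> (\<forall>u. \<not> E u u)"

definition gw :: "('a \<Rightarrow> 'a \<Rightarrow> bool) \<Rightarrow> 'a \<Rightarrow> 'a \<Rightarrow> real" where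
  "gw E u v = (if E u v then 1 else 0)"

definition wset :: "('a \<Rightarrow> 'a \<Rightarrow> bool) \<Rightarrow> 'a set \<Rightarrow> 'a set \<Rightarrow> real" where
  "wset E U W = (\<Sum>u\<in>U. \<Sum>v\<in>W. gw E u v)"

definition num_edges :: "'a set \<Rightarrow> ('a \<Rightarrow> 'a \<Rightarrow> bool) \<Rightarrow> nat" where
  "num_edges V E = card {{u, v} | u v. u \<in> V \<and> v \<in> V \<and> E u v}"

definition opt :: "'a set \<Rightarrow> ('a \<Rightarrow> 'a \<Rightarrow> real) \<Rightarrow> 'b set \<Rightarrow> ('b \<Rightarrow> 'b \<Rightarrow> real) \<Rightarrow> real" where
  "opt A wA B wB = Max ((\<lambda>h. \<Sum>u\<in>A. \<Sum>v\<in>A. wA u v * wB (h u) (h v)) ` (A \<rightarrow>\<^sub>E B))"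

(* |ln a - ln b| with ln 0 = -infinity and |ln 0 - ln 0| = 0 *)
definition lndist :: "real \<Rightarrow> real \<Rightarrow> ereal" where
  "lndist a b = (if a = 0 \<and> b = 0 then 0
                 else if a = 0 \<or> b = 0 then \<infinity>
                 else ereal \<bar>ln a - ln b\<bar>)"

(* d_opt: supremum over all finite (nonempty) Q_{>=0}-weighted structures C;
   every such C is isomorphic to one on vertex set {..<m}. *)
definition d_opt :: "'a set \<Rightarrow> ('a \<Rightarrow> 'a \<Rightarrow> real) \<Rightarrow> 'b set \<Rightarrow> ('b \<Rightarrow> 'b \<Rightarrow> real) \<Rightarrow> ereal" where
  "d_opt A wA B wB =
     (SUP C \<in> {(m, w). (m::nat) \<ge> 1 \<and> (\<forall>u v. w u v \<in> \<rat> \<and> w u v \<ge> (0::real))}.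
        lndist (opt A wA {..<fst C} (snd C)) (opt B wB {..<fst C} (snd C)))"

definition homogeneous :: "('a \<Rightarrow> 'a \<Rightarrow> bool) \<Rightarrow> 'a set \<Rightarrow> 'a set \<Rightarrow> real \<Rightarrow> bool" where
  "homogeneous E A B \<epsilon> \<longleftrightarrow>
     (let d = wset E A B / (real (card A) * real (card B)) in
      \<forall>W1\<subseteq>A. \<forall>W2\<subseteq>B.
        \<bar>wset E W1 W2 - d * real (card W1) * real (card W2)\<bar> \<le> \<epsilon> * real (card A) * real (card B))"

(* epsilon-regular k-partition V_1..V_k, indexed here as P 0, ..., P (k-1) *)
definition regular_partition :: "'a set \<Rightarrow> ('a \<Rightarrow> 'a \<Rightarrow> bool) \<Rightarrow> nat \<Rightarrow> real \<Rightarrow> (nat \<Rightarrow> 'a set) \<Rightarrow> bool" where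
  "regular_partition V E k \<epsilon> P \<longleftrightarrow>
     (\<forall>i<k. P i \<subseteq> V) \<and> (\<Union>i<k. P i) = V \<and>
     (\<forall>i<k. \<forall>j<k. i \<noteq> j \<longrightarrow> P i \<inter> P j = {}) \<and>
     (\<forall>i<k. int (card (P i)) = \<lfloor>real (card V) / real k\<rfloor> \<or>
            int (card (P i)) = \<lceil>real (card V) / real k\<rceil>) \<and>
     (\<forall>i<k. \<forall>j<k. i \<noteq> j \<longrightarrow> homogeneous E (P i) (P j) \<epsilon>)"

definition quot_weight :: "('a \<Rightarrow> 'a \<Rightarrow> bool) \<Rightarrow> (nat \<Rightarrow> 'a set) \<Rightarrow> nat \<Rightarrow> nat \<Rightarrow> real" where
  "quot_weight E P i j = wset E (P i) (P j)"

end

theory Submission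
  imports Defs
begin

definition cnt :: "('a \<Rightarrow> 'b \<Rightarrow> bool) \<Rightarrow> 'a set \<Rightarrow> 'b set \<Rightarrow> real" where
  "cnt R X Y = (\<Sum>u\<in>X. \<Sum>v\<in>Y. if R u v then 1 else 0)"

definition avg :: "'a set \<Rightarrow> ('a \<Rightarrow> real) \<Rightarrow> real" where
  "avg S f = (\<Sum>x\<in>S. f x) / real (card S)"

definition avg2 :: "'a set \<Rightarrow> 'b set \<Rightarrow> ('a \<Rightarrow> 'b \<Rightarrow> real) \<Rightarrow> real" where
  "avg2 S T F = (\<Sum>x\<in>S. \<Sum>y\<in>T. F x y) / (real (card S) * real (card T))"

lemma cnt_single: "finite Y \<Longrightarrow> cnt R {u} Y = real (card {v\<in>Y. R u v})"
  unfolding cnt_def by (simp add: sum.If_cases Int_def conj_commute)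

lemma cnt_single2: "finite X \<Longrightarrow> cnt R X {v} = real (card {u\<in>X. R u v})"
  unfolding cnt_def by (simp add: sum.If_cases[of X "\<lambda>u. R u v"] Int_def conj_commute)

lemma cnt_rows: "cnt R X Y = (\<Sum>u\<in>X. cnt R {u} Y)"
  unfolding cnt_def by simp

lemma cnt_cols: "cnt R X Y = (\<Sum>v\<in>Y. cnt R X {v})"
  unfolding cnt_def by (simp add: sum.swap[of _ X])

lemma cnt_nonneg: "cnt R X Y \<ge> 0"
  unfolding cnt_def by (intro sum_nonneg) auto

lemma cnt_le: "finite X \<Longrightarrow> finite Y \<Longrightarrow> cnt R X Y \<le> real (card X) * real (card Y)"
proof -
  assume "finite X" "finite Y"
  have "cnt R X Y \<le> (\<Sum>u\<in>X. \<Sum>v\<in>Y. 1)" unfolding cnt_def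
    by (intro sum_mono) auto
  then show ?thesis by simp
qed

lemma low_deg:
  fixes \<rho> \<gamma> K :: real
  assumes X: "finite X" and Y: "finite Y" and g: "\<gamma> > 0"
    and hom: "\<And>A. A \<subseteq> X \<Longrightarrow> cnt R A Y \<ge> \<rho> * card A * card Y - K"
  shows "\<gamma> * card {u\<in>X. cnt R {u} Y < (\<rho> - \<gamma>) * card Y} * card Y \<le> K"
proof -
  let ?L = "{u\<in>X. cnt R {u} Y < (\<rho> - \<gamma>) * card Y}"
  have fL: "finite ?L" using X by simp
  have "cnt R ?L Y = (\<Sum>u\<in>?L. cnt R {u} Y)" by (rule cnt_rows)
  also have "\<dots> \<le> (\<Sum>u\<in>?L. (\<rho> - \<gamma>) * card Y)"
    by (intro sum_mono) auto
  also have "\<dots> = (\<rho> - \<gamma>) * card ?L * card Y" by simp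
  finally have "cnt R ?L Y \<le> (\<rho> - \<gamma>) * card ?L * card Y" .
  moreover have "cnt R ?L Y \<ge> \<rho> * card ?L * card Y - K" by (rule hom) auto
  ultimately show ?thesis by (simp add: algebra_simps)
qed

lemma high_deg:
  fixes \<rho> \<gamma> K :: real
  assumes X: "finite X" and Y: "finite Y" and g: "\<gamma> > 0"
    and hom: "\<And>A. A \<subseteq> X \<Longrightarrow> cnt R A Y \<le> \<rho> * card A * card Y + K"
  shows "\<gamma> * card {u\<in>X. cnt R {u} Y > (\<rho> + \<gamma>) * card Y} * card Y \<le> K"
proof -
  let ?L = "{u\<in>X. cnt R {u} Y > (\<rho> + \<gamma>) * card Y}"
  have fL: "finite ?L" using X by simp
  have "(\<rho> + \<gamma>) * card ?L * card Y = (\<Sum>u\<in>?L. (\<rho> + \<gamma>) * card Y)" by simp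
  also have "\<dots> \<le> (\<Sum>u\<in>?L. cnt R {u} Y)"
    by (intro sum_mono) auto
  also have "\<dots> = cnt R ?L Y" by (rule cnt_rows[symmetric])
  finally have "cnt R ?L Y \<ge> (\<rho> + \<gamma>) * card ?L * card Y" .
  moreover have "cnt R ?L Y \<le> \<rho> * card ?L * card Y + K" by (rule hom) auto
  ultimately show ?thesis by (simp add: algebra_simps)
qed

lemma cnt_flip: "cnt R X Y = cnt (\<lambda>v u. R u v) Y X"
  unfolding cnt_def by (rule sum.swap)

lemma low_deg_col:
  fixes \<rho> \<gamma> K :: real
  assumes X: "finite X" and Y: "finite Y" and g: "\<gamma> > 0"
    and hom: "\<And>B. B \<subseteq> Y \<Longrightarrow> cnt R X B \<ge> \<rho> * card X * card B - K"
  shows "\<gamma> * card {v\<in>Y. cnt R X {v} < (\<rho> - \<gamma>) * card X} * card X \<le> K"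
proof -
  have "\<gamma> * card {v\<in>Y. cnt (\<lambda>v u. R u v) {v} X < (\<rho> - \<gamma>) * card X} * card X \<le> K"
    by (rule low_deg[OF Y X g]) (use hom in \<open>auto simp: cnt_flip[of R X] mult.commute mult.left_commute\<close>)
  then show ?thesis by (simp add: cnt_flip[of R X])
qed

lemma avg_restrict_lb:
  fixes \<phi> :: "'b \<Rightarrow> real" and D :: real
  assumes Y: "finite Y" and nn: "\<forall>v\<in>Y. 0 \<le> \<phi> v" and D: "real (card {v\<in>Y. R v}) \<le> D"
  shows "avg {v\<in>Y. R v} \<phi> \<ge> (\<Sum>v\<in>Y. if R v then \<phi> v else 0) / D"
proof -
  let ?Y = "{v\<in>Y. R v}"
  have s: "(\<Sum>v\<in>Y. if R v then \<phi> v else 0) = (\<Sum>v\<in>?Y. \<phi> v)"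
    using Y by (simp add: sum.inter_filter)
  have snn: "(\<Sum>v\<in>?Y. \<phi> v) \<ge> 0" using nn by (intro sum_nonneg) auto
  show ?thesis
  proof (cases "card ?Y = 0")
    case True
    then have "?Y = {}" using Y by simp
    then have "(\<Sum>v\<in>?Y. \<phi> v) = 0" by (simp only: sum.empty)
    then show ?thesis unfolding avg_def s by simp
  next
    case False
    then have "real (card ?Y) > 0" by simp
    then show ?thesis unfolding avg_def s
      by (intro divide_left_mono snn D) (use D in auto)
  qed
qed

lemma swap_count:
  fixes \<phi> :: "'b \<Rightarrow> real"
  shows "(\<Sum>u\<in>X. \<Sum>v\<in>Y. if R u v then \<phi> v else 0) = (\<Sum>v\<in>Y. \<phi> v * cnt R X {v})"
proof -
  have "(\<Sum>v\<in>Y. \<phi> v * cnt R X {v}) = (\<Sum>v\<in>Y. \<Sum>u\<in>X. if R u v then \<phi> v else 0)"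
    unfolding cnt_def sum_distrib_left by (intro sum.cong refl) auto
  also have "\<dots> = (\<Sum>u\<in>X. \<Sum>v\<in>Y. if R u v then \<phi> v else 0)" by (rule sum.swap)
  finally show ?thesis by simp
qed

lemma unary_avg:
  fixes \<rho> \<gamma> b \<Phi> :: real and \<phi> :: "'b \<Rightarrow> real"
  assumes X: "finite X" "X \<noteq> {}" and Y: "finite Y"
    and phi: "\<forall>v\<in>Y. 0 \<le> \<phi> v \<and> \<phi> v \<le> \<Phi>" and b: "b \<ge> 0" and Phi: "\<Phi> \<ge> 0"
    and rg: "0 \<le> \<rho> - \<gamma>" "0 < \<rho> + \<gamma>"
    and up: "\<forall>u\<in>X. cnt R {u} Y \<le> (\<rho> + \<gamma>) * card Y"
    and bad: "card {v\<in>Y. cnt R X {v} < (\<rho> - \<gamma>) * card X} \<le> b * card Y"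
  shows "(\<Sum>u\<in>X. avg {v\<in>Y. R u v} \<phi>) \<ge> card X * ((\<rho> - \<gamma>) / (\<rho> + \<gamma>)) * (avg Y \<phi> - b * \<Phi>)"
proof (cases "Y = {}")
  case True
  have "\<Phi> \<ge> 0 \<or> True" by simp
  have "card X * ((\<rho> - \<gamma>) / (\<rho> + \<gamma>)) * (avg Y \<phi> - b * \<Phi>) \<le> 0"
  proof -
    have "b * \<Phi> \<ge> 0 \<or> \<Phi> < 0" using b by auto
    show ?thesis
      using True rg b Phi by (auto simp: avg_def intro!: mult_nonneg_nonpos mult_nonneg_nonneg divide_nonneg_pos)
  qed
  moreover have "(\<Sum>u\<in>X. avg {v\<in>Y. R u v} \<phi>) = 0" using True by (simp add: avg_def)
  ultimately show ?thesis by simp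
next
  case False
  let ?B = "{v\<in>Y. cnt R X {v} < (\<rho> - \<gamma>) * card X}"
  have cY: "real (card Y) > 0" using False Y by (simp add: card_gt_0_iff)
  have D: "(\<rho> + \<gamma>) * card Y > 0" using rg cY by simp
  have st1: "avg {v\<in>Y. R u v} \<phi> \<ge> (\<Sum>v\<in>Y. if R u v then \<phi> v else 0) / ((\<rho> + \<gamma>) * card Y)"
    if "u \<in> X" for u
    using avg_restrict_lb[OF Y, of \<phi> "R u" "(\<rho> + \<gamma>) * card Y"] phi up that
    by (simp add: cnt_single[OF Y])
  have "(\<Sum>u\<in>X. avg {v\<in>Y. R u v} \<phi>) \<ge> (\<Sum>u\<in>X. (\<Sum>v\<in>Y. if R u v then \<phi> v else 0) / ((\<rho> + \<gamma>) * card Y))"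
    by (intro sum_mono st1)
  also have "(\<Sum>u\<in>X. (\<Sum>v\<in>Y. if R u v then \<phi> v else 0) / ((\<rho> + \<gamma>) * card Y))
      = (\<Sum>v\<in>Y. \<phi> v * cnt R X {v}) / ((\<rho> + \<gamma>) * card Y)"
    by (simp add: sum_divide_distrib[symmetric] swap_count)
  finally have A: "(\<Sum>u\<in>X. avg {v\<in>Y. R u v} \<phi>) \<ge> (\<Sum>v\<in>Y. \<phi> v * cnt R X {v}) / ((\<rho> + \<gamma>) * card Y)" .
  have "(\<Sum>v\<in>Y. \<phi> v * cnt R X {v}) \<ge> (\<Sum>v\<in>Y. (if v \<in> ?B then 0 else \<phi> v * ((\<rho> - \<gamma>) * card X)))"
  proof (intro sum_mono)
    fix v assume v: "v \<in> Y"
    show "(if v \<in> ?B then 0 else \<phi> v * ((\<rho> - \<gamma>) * card X)) \<le> \<phi> v * cnt R X {v}"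
      using phi v cnt_nonneg[of R X "{v}"] by (auto intro!: mult_left_mono)
  qed
  also have "(\<Sum>v\<in>Y. (if v \<in> ?B then 0 else \<phi> v * ((\<rho> - \<gamma>) * card X)))
      = (\<rho> - \<gamma>) * card X * ((\<Sum>v\<in>Y. \<phi> v) - (\<Sum>v\<in>?B. \<phi> v))"
  proof -
    have "(\<Sum>v\<in>Y. (if v \<in> ?B then 0 else \<phi> v * ((\<rho> - \<gamma>) * card X)))
        = (\<Sum>v\<in>Y. \<phi> v * ((\<rho> - \<gamma>) * card X)) - (\<Sum>v\<in>Y. if v \<in> ?B then \<phi> v * ((\<rho> - \<gamma>) * card X) else 0)"
      by (simp add: sum_subtractf[symmetric] if_distrib cong: if_cong)
    also have "(\<Sum>v\<in>Y. if v \<in> ?B then \<phi> v * ((\<rho> - \<gamma>) * card X) else 0) = (\<Sum>v\<in>?B. \<phi> v * ((\<rho> - \<gamma>) * card X))"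
      using Y by (simp add: sum.If_cases Int_def)
    finally have e: "(\<Sum>v\<in>Y. (if v \<in> ?B then 0 else \<phi> v * ((\<rho> - \<gamma>) * card X)))
      = (\<Sum>v\<in>Y. \<phi> v) * ((\<rho> - \<gamma>) * card X) - (\<Sum>v\<in>?B. \<phi> v) * ((\<rho> - \<gamma>) * card X)"
      by (simp only: sum_distrib_right)
    show ?thesis unfolding e by (simp add: algebra_simps)
  qed
  finally have B1: "(\<Sum>v\<in>Y. \<phi> v * cnt R X {v}) \<ge> (\<rho> - \<gamma>) * card X * ((\<Sum>v\<in>Y. \<phi> v) - (\<Sum>v\<in>?B. \<phi> v))" .
  have "(\<Sum>v\<in>?B. \<phi> v) \<le> (\<Sum>v\<in>?B. \<Phi>)" using phi by (intro sum_mono) auto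
  also have "\<dots> = card ?B * \<Phi>" by simp
  also have "\<dots> \<le> b * card Y * \<Phi>" using bad Phi by (intro mult_right_mono) auto
  finally have B2: "(\<Sum>v\<in>?B. \<phi> v) \<le> b * card Y * \<Phi>" .
  have B3: "(\<Sum>v\<in>Y. \<phi> v * cnt R X {v}) \<ge> (\<rho> - \<gamma>) * card X * ((\<Sum>v\<in>Y. \<phi> v) - b * card Y * \<Phi>)"
    using B1 B2 rg by (smt (verit) mult_left_mono of_nat_0_le_iff mult_nonneg_nonneg)
  have "card X * ((\<rho> - \<gamma>) / (\<rho> + \<gamma>)) * (avg Y \<phi> - b * \<Phi>)
      = ((\<rho> - \<gamma>) * card X * ((\<Sum>v\<in>Y. \<phi> v) - b * card Y * \<Phi>)) / ((\<rho> + \<gamma>) * card Y)"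
    using cY rg unfolding avg_def by (simp add: field_simps)
  also have "\<dots> \<le> (\<Sum>v\<in>Y. \<phi> v * cnt R X {v}) / ((\<rho> + \<gamma>) * card Y)"
    using B3 D by (intro divide_right_mono) auto
  finally show ?thesis using A by simp
qed

lemma avg2_as_avg:
  assumes "finite S" "finite T"
  shows "avg2 S T F = avg (S \<times> T) (\<lambda>p. F (fst p) (snd p))"
  unfolding avg2_def avg_def using assms
  by (simp add: sum.cartesian_product card_cartesian_product split_def)

lemma pair_avg:
  fixes \<rho>1 \<rho>2 \<gamma> b B :: real and F :: "'b \<Rightarrow> 'c \<Rightarrow> real"
  assumes X: "finite X" "X \<noteq> {}" and Y: "finite Y" and Z: "finite Z"
    and F: "\<forall>v\<in>Y. \<forall>w\<in>Z. 0 \<le> F v w \<and> F v w \<le> B" and b: "b \<ge> 0" and B: "B \<ge> 0"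
    and rg: "0 \<le> \<rho>1 - \<gamma>" "0 < \<rho>1 + \<gamma>" "0 \<le> \<rho>2 - \<gamma>" "0 < \<rho>2 + \<gamma>"
    and up1: "\<forall>u\<in>X. cnt R1 {u} Y \<le> (\<rho>1 + \<gamma>) * card Y"
    and up2: "\<forall>u\<in>X. cnt R2 {u} Z \<le> (\<rho>2 + \<gamma>) * card Z"
    and bad: "card {p\<in>Y \<times> Z. card {u\<in>X. R1 u (fst p) \<and> R2 u (snd p)} < (\<rho>1 - \<gamma>) * (\<rho>2 - \<gamma>) * card X}
                \<le> b * (card Y * card Z)"
  shows "(\<Sum>u\<in>X. avg2 {v\<in>Y. R1 u v} {w\<in>Z. R2 u w} F)
          \<ge> card X * ((\<rho>1 - \<gamma>) * (\<rho>2 - \<gamma>) / ((\<rho>1 + \<gamma>) * (\<rho>2 + \<gamma>))) * (avg2 Y Z F - b * B)"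
proof -
  define R where "R = (\<lambda>u p. R1 u (fst p) \<and> R2 u (snd p))"
  define r where "r = ((\<rho>1 + \<gamma>) * (\<rho>2 + \<gamma>) + (\<rho>1 - \<gamma>) * (\<rho>2 - \<gamma>)) / 2"
  define g where "g = ((\<rho>1 + \<gamma>) * (\<rho>2 + \<gamma>) - (\<rho>1 - \<gamma>) * (\<rho>2 - \<gamma>)) / 2"
  have rp: "r + g = (\<rho>1 + \<gamma>) * (\<rho>2 + \<gamma>)" and rm: "r - g = (\<rho>1 - \<gamma>) * (\<rho>2 - \<gamma>)"
    unfolding r_def g_def by (simp_all add: field_simps)
  have YZ: "finite (Y \<times> Z)" using Y Z by simp
  have sets: "{p\<in>Y \<times> Z. R u p} = {v\<in>Y. R1 u v} \<times> {w\<in>Z. R2 u w}" for u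
    unfolding R_def by auto
  have up: "\<forall>u\<in>X. cnt R {u} (Y \<times> Z) \<le> (r + g) * card (Y \<times> Z)"
  proof
    fix u assume u: "u \<in> X"
    have "cnt R {u} (Y \<times> Z) = real (card {v\<in>Y. R1 u v}) * real (card {w\<in>Z. R2 u w})"
      using YZ by (simp add: cnt_single sets card_cartesian_product)
    also have "\<dots> \<le> ((\<rho>1 + \<gamma>) * card Y) * ((\<rho>2 + \<gamma>) * card Z)"
      using up1 up2 u by (intro mult_mono) (auto simp: cnt_single[OF Y] cnt_single[OF Z])
    finally show "cnt R {u} (Y \<times> Z) \<le> (r + g) * card (Y \<times> Z)"
      unfolding rp by (simp add: card_cartesian_product algebra_simps)
  qed
  have cntp: "cnt R X {p} = real (card {u\<in>X. R1 u (fst p) \<and> R2 u (snd p)})" for p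
    using X by (simp add: cnt_single2 R_def)
  have bad': "card {p\<in>Y \<times> Z. cnt R X {p} < (r - g) * card X} \<le> b * card (Y \<times> Z)"
    using bad unfolding rm cntp by (simp add: card_cartesian_product)
  have Fp: "\<forall>p\<in>Y \<times> Z. 0 \<le> F (fst p) (snd p) \<and> F (fst p) (snd p) \<le> B" using F by auto
  have main: "(\<Sum>u\<in>X. avg {p\<in>Y \<times> Z. R u p} (\<lambda>p. F (fst p) (snd p)))
      \<ge> card X * ((r - g) / (r + g)) * (avg (Y \<times> Z) (\<lambda>p. F (fst p) (snd p)) - b * B)"
    by (rule unary_avg[OF X YZ Fp b B _ _ up bad']) (use rg rm rp in auto)
  have l: "avg2 {v\<in>Y. R1 u v} {w\<in>Z. R2 u w} F = avg {p\<in>Y \<times> Z. R u p} (\<lambda>p. F (fst p) (snd p))" for u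
    unfolding sets using Y Z by (intro avg2_as_avg) auto
  show ?thesis using main unfolding l avg2_as_avg[OF Y Z] rp rm .
qed

lemma lift_avg:
  fixes \<kappa> \<rho> \<gamma> \<beta> B :: real
  assumes C: "finite C" and XC: "X \<subseteq> C" and Xne: "X \<noteq> {}" and Y: "finite Y"
    and F: "\<forall>u\<in>C. \<forall>v\<in>Y. 0 \<le> F u v \<and> F u v \<le> B"
    and zero: "\<forall>u\<in>C. \<forall>v\<in>Y. \<not> R u v \<longrightarrow> F u v = 0"
    and up: "\<forall>u\<in>X. cnt R {u} Y \<le> (\<rho> + \<gamma>) * card Y"
    and pos: "\<rho> > 0" "\<gamma> \<ge> 0" "\<kappa> \<ge> 0" "B \<ge> 0" "\<beta> \<ge> 0"
    and cC: "card (C - X) \<le> \<beta> * card C" "card C \<le> 2 * card X"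
  shows "(\<Sum>u\<in>X. \<kappa> * \<rho> * avg {v\<in>Y. R u v} (F u))
          \<ge> card X * (\<kappa> * avg2 C Y F - \<kappa> * B * (2 * \<gamma> / \<rho> + 2 * \<beta>))"
proof (cases "Y = {}")
  case True
  have "card X * (\<kappa> * avg2 C Y F - \<kappa> * B * (2 * \<gamma> / \<rho> + 2 * \<beta>)) \<le> 0"
    using True pos by (simp add: avg2_def mult_nonpos_nonneg)
  moreover have "(\<Sum>u\<in>X. \<kappa> * \<rho> * avg {v\<in>Y. R u v} (F u)) = 0" using True by (simp add: avg_def)
  ultimately show ?thesis by simp
next
  case False
  have X: "finite X" using C XC finite_subset by auto
  have cY: "real (card Y) > 0" using False Y by (simp add: card_gt_0_iff)
  have cX: "real (card X) > 0" using X Xne by (simp add: card_gt_0_iff)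
  have cXC: "card X \<le> card C" using C XC by (simp add: card_mono)
  define S where "S = (\<Sum>u\<in>C. \<Sum>v\<in>Y. F u v)"
  have Snn: "S \<ge> 0" unfolding S_def using F by (intro sum_nonneg) auto
  have SB: "S \<le> card C * card Y * B"
  proof -
    have "S \<le> (\<Sum>u\<in>C. \<Sum>v\<in>Y. B)" unfolding S_def using F by (intro sum_mono) auto
    then show ?thesis by simp
  qed
  have st1: "avg {v\<in>Y. R u v} (F u) \<ge> (\<Sum>v\<in>Y. F u v) / ((\<rho> + \<gamma>) * card Y)" if u: "u \<in> X" for u
  proof -
    have "(\<Sum>v\<in>Y. if R u v then F u v else 0) = (\<Sum>v\<in>Y. F u v)"
      using zero u XC by (intro sum.cong) auto
    moreover have "avg {v\<in>Y. R u v} (F u) \<ge> (\<Sum>v\<in>Y. if R u v then F u v else 0) / ((\<rho> + \<gamma>) * card Y)"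
      using avg_restrict_lb[OF Y, of "F u" "R u" "(\<rho> + \<gamma>) * card Y"] F up u XC
      by (auto simp: cnt_single[OF Y])
    ultimately show ?thesis by simp
  qed
  have A0: "(\<Sum>u\<in>X. \<kappa> * \<rho> * avg {v\<in>Y. R u v} (F u)) \<ge> (\<Sum>u\<in>X. \<kappa> * \<rho> * ((\<Sum>v\<in>Y. F u v) / ((\<rho> + \<gamma>) * card Y)))"
    using pos by (intro sum_mono mult_left_mono st1) auto
  have A1: "(\<Sum>u\<in>X. \<kappa> * \<rho> * ((\<Sum>v\<in>Y. F u v) / ((\<rho> + \<gamma>) * card Y))) = \<kappa> * \<rho> / ((\<rho> + \<gamma>) * card Y) * (\<Sum>u\<in>X. \<Sum>v\<in>Y. F u v)"
    by (simp add: sum_distrib_left sum_divide_distrib)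
  from A0 A1 have A: "(\<Sum>u\<in>X. \<kappa> * \<rho> * avg {v\<in>Y. R u v} (F u)) \<ge> \<kappa> * \<rho> / ((\<rho> + \<gamma>) * card Y) * (\<Sum>u\<in>X. \<Sum>v\<in>Y. F u v)" by simp
  have "(\<Sum>u\<in>X. \<Sum>v\<in>Y. F u v) = S - (\<Sum>u\<in>C - X. \<Sum>v\<in>Y. F u v)"
    unfolding S_def using sum.subset_diff[OF XC C, of "\<lambda>u. \<Sum>v\<in>Y. F u v"] by simp
  moreover have "(\<Sum>u\<in>C - X. \<Sum>v\<in>Y. F u v) \<le> card (C - X) * card Y * B"
  proof -
    have "(\<Sum>u\<in>C - X. \<Sum>v\<in>Y. F u v) \<le> (\<Sum>u\<in>C - X. \<Sum>v\<in>Y. B)" using F by (intro sum_mono) auto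
    then show ?thesis by simp
  qed
  moreover have "card (C - X) * card Y * B \<le> \<beta> * card C * card Y * B"
    using cC pos by (intro mult_right_mono) (auto intro: mult_right_mono)
  ultimately have B1: "(\<Sum>u\<in>X. \<Sum>v\<in>Y. F u v) \<ge> S - \<beta> * card C * card Y * B" by linarith
  have k0: "\<kappa> * \<rho> / ((\<rho> + \<gamma>) * card Y) \<ge> 0" using pos cY by simp
  have A2: "(\<Sum>u\<in>X. \<kappa> * \<rho> * avg {v\<in>Y. R u v} (F u)) \<ge> \<kappa> * \<rho> / ((\<rho> + \<gamma>) * card Y) * (S - \<beta> * card C * card Y * B)"
    using A mult_left_mono[OF B1 k0] by linarith
  have e1: "\<kappa> * \<rho> / ((\<rho> + \<gamma>) * card Y) * (S - \<beta> * card C * card Y * B)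
      = \<kappa> * S / card Y - \<kappa> * S / card Y * (\<gamma> / (\<rho> + \<gamma>)) - \<kappa> * \<beta> * card C * B * (\<rho> / (\<rho> + \<gamma>))"
  proof -
    have n1: "\<rho> + \<gamma> \<noteq> 0" "real (card Y) \<noteq> 0" using cY pos by auto
    have x: "1 - \<gamma> / (\<rho> + \<gamma>) = \<rho> / (\<rho> + \<gamma>)" using n1 by (simp add: field_simps)
    have "\<kappa> * S / card Y - \<kappa> * S / card Y * (\<gamma> / (\<rho> + \<gamma>)) = \<kappa> * S / card Y * (1 - \<gamma> / (\<rho> + \<gamma>))"
      by (simp only: right_diff_distrib mult_1_right)
    also have "\<dots> = \<kappa> * S / card Y * (\<rho> / (\<rho> + \<gamma>))" by (simp only: x)
    finally have y: "\<kappa> * S / card Y - \<kappa> * S / card Y * (\<gamma> / (\<rho> + \<gamma>)) = \<kappa> * S / card Y * (\<rho> / (\<rho> + \<gamma>))" .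
    have z: "\<kappa> * \<rho> / ((\<rho> + \<gamma>) * card Y) * (S - \<beta> * card C * card Y * B)
       = \<kappa> * S / card Y * (\<rho> / (\<rho> + \<gamma>)) - \<kappa> * \<beta> * card C * B * (\<rho> / (\<rho> + \<gamma>))"
    proof -
      define q where "q = \<rho> / (\<rho> + \<gamma>)"
      have q1: "\<kappa> * \<rho> / ((\<rho> + \<gamma>) * card Y) = \<kappa> / card Y * q" unfolding q_def by simp
      have "\<kappa> / card Y * q * (S - \<beta> * card C * card Y * B) = \<kappa> * S / card Y * q - \<kappa> * \<beta> * card C * B * q"
        using n1 by (simp add: field_simps)
      then show ?thesis unfolding q1 q_def .
    qed
    show ?thesis using y z by linarith
  qed
  have t1: "\<kappa> * S / card Y * (\<gamma> / (\<rho> + \<gamma>)) \<le> \<kappa> * (card C * B) * (\<gamma> / \<rho>)"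
  proof -
    have "S / card Y \<le> card C * B" using SB cY by (simp add: divide_le_eq algebra_simps)
    then have "\<kappa> * (S / card Y) \<le> \<kappa> * (card C * B)" using pos by (intro mult_left_mono) auto
    then have "\<kappa> * S / card Y \<le> \<kappa> * (card C * B)" by simp
    moreover have "\<gamma> / (\<rho> + \<gamma>) \<le> \<gamma> / \<rho>" using pos by (simp add: frac_le)
    ultimately show ?thesis using pos Snn cY
      by (intro mult_mono) auto
  qed
  have t2: "\<kappa> * \<beta> * card C * B * (\<rho> / (\<rho> + \<gamma>)) \<le> \<kappa> * \<beta> * card C * B"
  proof -
    have "\<rho> / (\<rho> + \<gamma>) \<le> 1" using pos by simp
    then show ?thesis using pos by (intro mult_left_le) auto
  qed
  have t3: "card X * (\<kappa> * avg2 C Y F) \<le> \<kappa> * S / card Y"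
  proof -
    have "card X * (\<kappa> * avg2 C Y F) = (card X / card C) * (\<kappa> * S / card Y)"
      unfolding avg2_def S_def by (simp add: field_simps)
    also have "\<dots> \<le> 1 * (\<kappa> * S / card Y)"
      using cXC cX Snn pos cY by (intro mult_right_mono) (auto simp: divide_le_eq_1)
    finally show ?thesis by simp
  qed
  have t4: "\<kappa> * (card C * B) * (\<gamma> / \<rho>) + \<kappa> * \<beta> * card C * B \<le> card X * (\<kappa> * B * (2 * \<gamma> / \<rho> + 2 * \<beta>))"
  proof -
    have "\<kappa> * (card C * B) * (\<gamma> / \<rho>) + \<kappa> * \<beta> * card C * B = card C * (\<kappa> * B * (\<gamma> / \<rho> + \<beta>))"
      by (simp add: algebra_simps)
    also have "\<dots> \<le> (2 * card X) * (\<kappa> * B * (\<gamma> / \<rho> + \<beta>))"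
      using cC pos by (intro mult_right_mono) auto
    finally show ?thesis by (simp add: algebra_simps)
  qed
  show ?thesis using A2 e1 t1 t2 t3 t4 by (simp add: algebra_simps)
qed

lemma bad_pairs:
  fixes \<rho>1 \<rho>2 \<gamma> K1 K2 :: real
  assumes XX0: "X \<subseteq> X0" and X0: "finite X0" and Y: "finite Y" and Z: "finite Z" and Xne: "X \<noteq> {}"
    and hom1: "\<And>A B. A \<subseteq> X0 \<Longrightarrow> B \<subseteq> Y \<Longrightarrow> cnt R1 A B \<ge> \<rho>1 * card A * card B - K1"
    and hom2: "\<And>A B. A \<subseteq> X0 \<Longrightarrow> B \<subseteq> Z \<Longrightarrow> cnt R2 A B \<ge> \<rho>2 * card A * card B - K2"
    and g: "\<gamma> > 0" "\<rho>1 - \<gamma> > 0" "\<rho>2 - \<gamma> \<ge> 0"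
  shows "card {p\<in>Y \<times> Z. card {u\<in>X. R1 u (fst p) \<and> R2 u (snd p)} < (\<rho>1 - \<gamma>) * (\<rho>2 - \<gamma>) * card X}
          \<le> K1 * card Z / (\<gamma> * card X) + card Y * K2 / (\<gamma> * (\<rho>1 - \<gamma>) * card X)"
proof -
  have X: "finite X" using XX0 X0 finite_subset by auto
  have cX: "real (card X) > 0" using X Xne by (simp add: card_gt_0_iff)
  define B1 where "B1 = {v\<in>Y. cnt R1 X {v} < (\<rho>1 - \<gamma>) * card X}"
  define A where "A = (\<lambda>v. {u\<in>X. R1 u v})"
  define B2 where "B2 = (\<lambda>v. {w\<in>Z. cnt R2 (A v) {w} < (\<rho>2 - \<gamma>) * card (A v)})"
  have fB1: "finite B1" unfolding B1_def using Y by simp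
  have fB2: "finite (B2 v)" for v unfolding B2_def using Z by simp
  have "\<gamma> * card B1 * card X \<le> K1"
    unfolding B1_def by (rule low_deg_col[OF X Y g(1)]) (use hom1 XX0 in auto)
  then have cB1: "card B1 \<le> K1 / (\<gamma> * card X)" using g cX by (simp add: field_simps)
  have cA: "card (A v) \<ge> (\<rho>1 - \<gamma>) * card X" if "v \<in> Y - B1" for v
    using that unfolding B1_def A_def by (auto simp: cnt_single2[OF X] not_less)
  have cB2: "card (B2 v) \<le> K2 / (\<gamma> * (\<rho>1 - \<gamma>) * card X)" if v: "v \<in> Y - B1" for v
  proof -
    have AX: "A v \<subseteq> X" unfolding A_def by auto
    have fA: "finite (A v)" using X AX finite_subset by auto
    have "\<gamma> * card (B2 v) * card (A v) \<le> K2"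
      unfolding B2_def by (rule low_deg_col[OF fA Z g(1)]) (use hom2 AX XX0 in auto)
    moreover have "\<gamma> * card (B2 v) * ((\<rho>1 - \<gamma>) * card X) \<le> \<gamma> * card (B2 v) * card (A v)"
      using cA[OF v] g by (intro mult_left_mono) auto
    ultimately have "\<gamma> * card (B2 v) * ((\<rho>1 - \<gamma>) * card X) \<le> K2" by linarith
    then show ?thesis using g cX by (simp add: field_simps)
  qed
  have sub: "{p\<in>Y \<times> Z. card {u\<in>X. R1 u (fst p) \<and> R2 u (snd p)} < (\<rho>1 - \<gamma>) * (\<rho>2 - \<gamma>) * card X}
      \<subseteq> B1 \<times> Z \<union> Sigma (Y - B1) B2"
  proof
    fix p assume p: "p \<in> {p\<in>Y \<times> Z. card {u\<in>X. R1 u (fst p) \<and> R2 u (snd p)} < (\<rho>1 - \<gamma>) * (\<rho>2 - \<gamma>) * card X}"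
    obtain v w where pv: "p = (v, w)" by force
    have v: "v \<in> Y" and w: "w \<in> Z" using p pv by auto
    show "p \<in> B1 \<times> Z \<union> Sigma (Y - B1) B2"
    proof (cases "v \<in> B1")
      case True then show ?thesis using pv w by auto
    next
      case False
      have AX: "A v \<subseteq> X" unfolding A_def by auto
      have fA: "finite (A v)" using X AX finite_subset by auto
      have eq: "card {u\<in>X. R1 u v \<and> R2 u w} = cnt R2 (A v) {w}"
      proof -
        have "{u\<in>X. R1 u v \<and> R2 u w} = {u\<in>A v. R2 u w}" unfolding A_def by auto
        then show ?thesis using cnt_single2[OF fA, of R2 w] by simp
      qed
      have "w \<in> B2 v"
      proof (rule ccontr)
        assume "w \<notin> B2 v"
        then have "cnt R2 (A v) {w} \<ge> (\<rho>2 - \<gamma>) * card (A v)" using w unfolding B2_def by auto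
        moreover have "(\<rho>2 - \<gamma>) * card (A v) \<ge> (\<rho>2 - \<gamma>) * ((\<rho>1 - \<gamma>) * card X)"
          using cA[of v] False v g by (intro mult_left_mono) auto
        ultimately have "card {u\<in>X. R1 u v \<and> R2 u w} \<ge> (\<rho>1 - \<gamma>) * (\<rho>2 - \<gamma>) * card X"
          unfolding eq by (simp add: algebra_simps)
        then show False using p pv by auto
      qed
      then show ?thesis using pv v False by auto
    qed
  qed
  have fin: "finite (B1 \<times> Z \<union> Sigma (Y - B1) B2)" using fB1 Z Y fB2 by auto
  have "card {p\<in>Y \<times> Z. card {u\<in>X. R1 u (fst p) \<and> R2 u (snd p)} < (\<rho>1 - \<gamma>) * (\<rho>2 - \<gamma>) * card X}
      \<le> card (B1 \<times> Z \<union> Sigma (Y - B1) B2)" by (rule card_mono[OF fin sub])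
  also have "\<dots> \<le> card (B1 \<times> Z) + card (Sigma (Y - B1) B2)" by (rule card_Un_le)
  also have "card (Sigma (Y - B1) B2) = (\<Sum>v\<in>Y - B1. card (B2 v))"
    using Y fB2 by (simp add: card_SigmaI)
  finally have c1: "real (card {p\<in>Y \<times> Z. card {u\<in>X. R1 u (fst p) \<and> R2 u (snd p)} < (\<rho>1 - \<gamma>) * (\<rho>2 - \<gamma>) * card X})
      \<le> real (card B1) * card Z + (\<Sum>v\<in>Y - B1. real (card (B2 v)))"
    by (simp add: card_cartesian_product flip: of_nat_add of_nat_mult of_nat_sum)
  have "(\<Sum>v\<in>Y - B1. real (card (B2 v))) \<le> (\<Sum>v\<in>Y - B1. K2 / (\<gamma> * (\<rho>1 - \<gamma>) * card X))"
    by (intro sum_mono cB2)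
  also have "\<dots> = card (Y - B1) * (K2 / (\<gamma> * (\<rho>1 - \<gamma>) * card X))" by simp
  also have "\<dots> \<le> card Y * (K2 / (\<gamma> * (\<rho>1 - \<gamma>) * card X))"
  proof (rule mult_right_mono)
    show "real (card (Y - B1)) \<le> real (card Y)" using Y by (simp add: card_mono)
    have "K2 \<ge> 0"
    proof -
      have "cnt R2 {} {} \<ge> \<rho>2 * card ({}::'a set) * card ({}::'c set) - K2" by (rule hom2) auto
      then show ?thesis by (simp add: cnt_def)
    qed
    then show "0 \<le> K2 / (\<gamma> * (\<rho>1 - \<gamma>) * card X)" using g cX by simp
  qed
  finally have c2: "(\<Sum>v\<in>Y - B1. real (card (B2 v))) \<le> card Y * K2 / (\<gamma> * (\<rho>1 - \<gamma>) * card X)" by simp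
  have c3: "real (card B1) * card Z \<le> K1 * card Z / (\<gamma> * card X)"
    using mult_right_mono[OF cB1, of "real (card Z)"] by simp
  show ?thesis using c1 c2 c3 by linarith
qed

locale emb =
  fixes k :: nat and P :: "nat \<Rightarrow> 'a set" and E :: "'a \<Rightarrow> 'a \<Rightarrow> bool"
    and Hr :: "nat \<Rightarrow> nat \<Rightarrow> bool" and \<rho> :: "nat \<Rightarrow> nat \<Rightarrow> real"
    and F :: "'a \<Rightarrow> 'a \<Rightarrow> real" and Bd \<epsilon> \<gamma> \<tau> \<alpha> \<beta> :: real
  assumes fin: "\<And>i. i < k \<Longrightarrow> finite (P i)"
    and Hsym: "\<And>i j. Hr i j = Hr j i"
    and Hk: "\<And>i j. Hr i j \<Longrightarrow> i < k \<and> j < k \<and> i \<noteq> j"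
    and Hrho: "\<And>i j. Hr i j \<Longrightarrow> \<tau> \<le> \<rho> i j \<and> \<rho> i j \<le> 1"
    and Hne: "\<And>i j. Hr i j \<Longrightarrow> card (P i) > 0"
    and hom: "\<And>i j A B. Hr i j \<Longrightarrow> A \<subseteq> P i \<Longrightarrow> B \<subseteq> P j \<Longrightarrow>
               \<bar>cnt E A B - \<rho> i j * card A * card B\<bar> \<le> \<epsilon> * card (P i) * card (P j)"
    and Fb: "\<And>u v. 0 \<le> F u v \<and> F u v \<le> Bd"
    and F0: "\<And>u v. \<not> E u v \<Longrightarrow> F u v = 0"
    and gpos: "0 < \<gamma>" and g2: "2 * \<gamma> \<le> \<tau>" and tau1: "\<tau> \<le> 1" and eps0: "0 \<le> \<epsilon>"
    and alpha_def: "\<alpha> = (\<tau> - \<gamma>) ^ k"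
    and beta_def: "\<beta> = 4 * k * \<epsilon> / (\<gamma> * (\<tau> - \<gamma>) * \<alpha>^2)"
    and beta_half: "\<beta> \<le> 1 / 2"
begin

definition Rl :: "nat \<Rightarrow> nat \<Rightarrow> 'a \<Rightarrow> 'a \<Rightarrow> bool" where
  "Rl i j u v = (if Hr i j then E u v else True)"
definition rh :: "nat \<Rightarrow> nat \<Rightarrow> real" where
  "rh i j = (if Hr i j then \<rho> i j else 1)"
definition N :: "nat \<Rightarrow> real" where
  "N i = real (card (P i))"
definition kap :: "nat \<Rightarrow> nat \<Rightarrow> real" where
  "kap i j = (if Hr i j then N i * N j else 0)"
definition lam :: "nat \<Rightarrow> nat \<Rightarrow> real" where
  "lam i j = kap i j * rh i j"
definition C :: "nat \<Rightarrow> (nat \<Rightarrow> 'a) \<Rightarrow> nat \<Rightarrow> 'a set" where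
  "C l t j = {v\<in>P j. \<forall>i<l. Rl i j (t i) v}"
definition phi :: "nat \<Rightarrow> (nat \<Rightarrow> 'a) \<Rightarrow> nat \<Rightarrow> 'a \<Rightarrow> real" where
  "phi l t j v = (\<Sum>i<l. lam i j * F (t i) v)"
definition Rz :: "nat \<Rightarrow> (nat \<Rightarrow> 'a) \<Rightarrow> real" where
  "Rz l t = (\<Sum>j<l. phi j t j (t j))"
definition U :: "nat \<Rightarrow> (nat \<Rightarrow> 'a) \<Rightarrow> real" where
  "U l t = (\<Sum>j\<in>{l..<k}. avg (C l t j) (phi l t j))"
definition Pr :: "nat \<Rightarrow> (nat \<Rightarrow> 'a) \<Rightarrow> real" where
  "Pr l t = (\<Sum>i\<in>{l..<k}. \<Sum>j\<in>{i<..<k}. kap i j * avg2 (C l t i) (C l t j) F)"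
definition T :: "nat \<Rightarrow> (nat \<Rightarrow> 'a) \<Rightarrow> real" where
  "T l t = Rz l t + U l t + Pr l t"
definition Inv :: "nat \<Rightarrow> (nat \<Rightarrow> 'a) \<Rightarrow> bool" where
  "Inv l t = (\<forall>j\<in>{l..<k}. real (card (C l t j)) \<ge> (\<tau> - \<gamma>) ^ l * N j)"
definition Typ :: "nat \<Rightarrow> (nat \<Rightarrow> 'a) \<Rightarrow> 'a set" where
  "Typ l t = {u\<in>C l t l. \<forall>j\<in>{l<..<k}.
      (rh l j - \<gamma>) * card (C l t j) \<le> cnt (Rl l j) {u} (C l t j) \<and>
      cnt (Rl l j) {u} (C l t j) \<le> (rh l j + \<gamma>) * card (C l t j)}"

lemma tg: "\<tau> - \<gamma> \<ge> \<gamma>" "\<tau> - \<gamma> > 0" "\<tau> - \<gamma> \<le> 1" "\<tau> > 0"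
  using gpos g2 tau1 by auto

lemma alpha_pos: "\<alpha> > 0" unfolding alpha_def using tg by simp
lemma alpha_le: "l \<le> k \<Longrightarrow> \<alpha> \<le> (\<tau> - \<gamma>) ^ l"
  unfolding alpha_def using tg by (intro power_decreasing) auto
lemma alpha_le1: "\<alpha> \<le> 1"
  unfolding alpha_def using tg by (simp add: power_le_one)

lemma rh_bounds: "\<tau> \<le> rh i j" "rh i j \<le> 1"
  unfolding rh_def using Hrho tau1 by auto

lemma N_nonneg: "N i \<ge> 0" unfolding N_def by simp

lemma kap_nonneg: "kap i j \<ge> 0" unfolding kap_def using N_nonneg by simp
lemma kap_le: "kap i j \<le> N i * N j" unfolding kap_def using N_nonneg by simp
lemma lam_nonneg: "lam i j \<ge> 0" unfolding lam_def using kap_nonneg rh_bounds tg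
  by (meson mult_nonneg_nonneg order_trans less_imp_le)
lemma lam_le: "lam i j \<le> N i * N j"
proof -
  have "lam i j \<le> kap i j * 1" unfolding lam_def using kap_nonneg rh_bounds by (intro mult_left_mono) auto
  then show ?thesis using kap_le[of i j] by simp
qed

lemma C_sub: "C l t j \<subseteq> P j" unfolding C_def by auto
lemma C_fin: "j < k \<Longrightarrow> finite (C l t j)" using fin C_sub finite_subset by metis
lemma C_0: "C 0 t j = P j" unfolding C_def by simp
lemma C_upd: "C l (t(l := u)) j = C l t j" unfolding C_def by simp
lemma C_Suc: "C (Suc l) (t(l := u)) j = {v\<in>C l t j. Rl l j u v}"
  unfolding C_def by (auto simp: less_Suc_eq)
lemma phi_upd: "phi l (t(l := u)) j = phi l t j" unfolding phi_def by (intro ext sum.cong) auto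
lemma phi_Suc: "phi (Suc l) (t(l := u)) j v = phi l t j v + lam l j * F u v"
  unfolding phi_def by (simp add: phi_def)
lemma phi_upd_gen: "j \<le> l \<Longrightarrow> phi j (t(l := u)) i = phi j t i" unfolding phi_def by (intro ext sum.cong) auto
lemma Rz_Suc: "Rz (Suc l) (t(l := u)) = Rz l t + phi l t l u"
proof -
  have "Rz (Suc l) (t(l := u)) = (\<Sum>j<l. phi j (t(l := u)) j ((t(l := u)) j)) + phi l (t(l := u)) l u"
    unfolding Rz_def by simp
  also have "(\<Sum>j<l. phi j (t(l := u)) j ((t(l := u)) j)) = Rz l t"
    unfolding Rz_def by (intro sum.cong) (auto simp: phi_upd_gen)
  finally show ?thesis by (simp only: phi_upd)
qed

lemma phi_nonneg: "phi l t j v \<ge> 0" unfolding phi_def using lam_nonneg Fb by (intro sum_nonneg mult_nonneg_nonneg) auto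

definition n :: real where "n = (\<Sum>i<k. N i)"

lemma N_le_n: "i < k \<Longrightarrow> N i \<le> n"
  unfolding n_def using N_nonneg by (intro member_le_sum) auto

lemma phi_le: "l \<le> k \<Longrightarrow> phi l t j v \<le> Bd * n * N j"
proof -
  assume l: "l \<le> k"
  have "phi l t j v \<le> (\<Sum>i<l. N i * N j * Bd)"
    unfolding phi_def using lam_le lam_nonneg Fb N_nonneg
    by (intro sum_mono mult_mono) (auto intro: mult_nonneg_nonneg)
  also have "\<dots> = (\<Sum>i<l. N i) * N j * Bd" by (simp add: sum_distrib_right)
  also have "\<dots> \<le> (\<Sum>i<k. N i) * N j * Bd"
    using l N_nonneg Fb[of undefined undefined]
    by (intro mult_right_mono sum_mono2) (auto intro: mult_nonneg_nonneg)
  finally show ?thesis unfolding n_def by (simp add: algebra_simps)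
qed

end

lemma cnt_True: "finite A \<Longrightarrow> finite B \<Longrightarrow> cnt (\<lambda>_ _. True) A B = real (card A) * real (card B)"
  unfolding cnt_def by simp

context emb begin

lemma hom_Rl:
  assumes "l < k" "j < k" "l \<noteq> j" "A \<subseteq> P l" "B \<subseteq> P j"
  shows "\<bar>cnt (Rl l j) A B - rh l j * card A * card B\<bar> \<le> \<epsilon> * N l * N j"
proof (cases "Hr l j")
  case True
  have "Rl l j = E" using True unfolding Rl_def by (intro ext) auto
  then show ?thesis using hom[OF True assms(4,5)] True unfolding rh_def N_def by simp
next
  case False
  have "Rl l j = (\<lambda>_ _. True)" using False unfolding Rl_def by (intro ext) auto
  moreover have "finite A" "finite B" using assms fin finite_subset by metis+
  ultimately show ?thesis using False eps0 N_nonneg unfolding rh_def by (simp add: cnt_True)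
qed

lemma beta_ge: "2 * k * \<epsilon> / (\<gamma> * \<alpha>^2) \<le> \<beta>"
proof -
  have a: "\<gamma> * \<alpha>^2 > 0" using gpos alpha_pos by simp
  have "2 * k * \<epsilon> / (\<gamma> * \<alpha>^2) \<le> 4 * k * \<epsilon> / (\<gamma> * \<alpha>^2)"
    using a eps0 by (intro divide_right_mono) auto
  also have "\<dots> \<le> 4 * k * \<epsilon> / (\<gamma> * (\<tau> - \<gamma>) * \<alpha>^2)"
  proof -
    have "\<gamma> * (\<tau> - \<gamma>) * \<alpha>^2 \<le> \<gamma> * \<alpha>^2" using tg a
      by (metis mult.commute mult.left_commute mult_left_le order_less_imp_le)
    moreover have "\<gamma> * (\<tau> - \<gamma>) * \<alpha>^2 > 0" by (intro mult_pos_pos) (use gpos tg alpha_pos in auto)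
    ultimately show ?thesis using eps0 by (intro divide_left_mono) auto
  qed
  finally show ?thesis unfolding beta_def .
qed

lemma beta_nonneg: "\<beta> \<ge> 0"
  unfolding beta_def using eps0 gpos tg alpha_pos by simp

lemma Inv_C:
  assumes "Inv l t" "l \<le> k" "j \<in> {l..<k}"
  shows "real (card (C l t j)) \<ge> \<alpha> * N j"
proof -
  have "\<alpha> * N j \<le> (\<tau> - \<gamma>) ^ l * N j" using alpha_le[OF assms(2)] N_nonneg by (intro mult_right_mono) auto
  then show ?thesis using assms unfolding Inv_def by force
qed

lemma low_high_bound:
  assumes l: "l < k" and inv: "Inv l t" and j: "j \<in> {l<..<k}"
    and X: "X \<subseteq> C l t l" and XE: "X \<noteq> {}"
  shows "card {u\<in>X. cnt (Rl l j) {u} (C l t j) < (rh l j - \<gamma>) * card (C l t j)} \<le> \<epsilon> * N l / (\<gamma> * \<alpha>)"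
    and "card {u\<in>X. cnt (Rl l j) {u} (C l t j) > (rh l j + \<gamma>) * card (C l t j)} \<le> \<epsilon> * N l / (\<gamma> * \<alpha>)"
proof -
  have jk: "j < k" "l \<noteq> j" using j by auto
  have fX: "finite X" using X C_fin[OF l] finite_subset by blast
  have fY: "finite (C l t j)" using C_fin jk by blast
  have XP: "X \<subseteq> P l" using X C_sub by blast
  have hl: "\<And>A. A \<subseteq> X \<Longrightarrow> cnt (Rl l j) A (C l t j) \<ge> rh l j * card A * card (C l t j) - \<epsilon> * N l * N j"
    using hom_Rl[OF l jk(1) jk(2)] XP C_sub by (smt (verit) order_trans)
  have hh: "\<And>A. A \<subseteq> X \<Longrightarrow> cnt (Rl l j) A (C l t j) \<le> rh l j * card A * card (C l t j) + \<epsilon> * N l * N j"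
    using hom_Rl[OF l jk(1) jk(2)] XP C_sub by (smt (verit) order_trans)
  have r: "\<epsilon> * N l * N j / (\<gamma> * card (C l t j)) \<le> \<epsilon> * N l / (\<gamma> * \<alpha>)" if ne: "C l t j \<noteq> {}"
  proof -
    have cpos: "real (card (C l t j)) > 0" using ne fY by (simp add: card_gt_0_iff)
    have ca: "real (card (C l t j)) \<ge> \<alpha> * N j" using Inv_C[OF inv] l j by auto
    have "\<epsilon> * N l * N j / (\<gamma> * card (C l t j)) \<le> \<epsilon> * N l * N j / (\<gamma> * (\<alpha> * N j))"
    proof (cases "N j = 0")
      case True then show ?thesis by simp
    next
      case False
      then have "N j > 0" using N_nonneg by (simp add: order_less_le)
      then show ?thesis using ca gpos alpha_pos eps0 N_nonneg cpos
        by (intro divide_left_mono mult_left_mono) (auto intro!: mult_nonneg_nonneg mult_pos_pos)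
    qed
    also have "\<dots> \<le> \<epsilon> * N l / (\<gamma> * \<alpha>)"
    proof (cases "N j = 0")
      case True
      have "\<epsilon> * N l / (\<gamma> * \<alpha>) \<ge> 0" using eps0 N_nonneg gpos alpha_pos by (intro divide_nonneg_pos mult_nonneg_nonneg mult_pos_pos) auto
      then show ?thesis using True by simp
    next
      case False then show ?thesis by (simp add: field_simps)
    qed
    finally show ?thesis .
  qed
  show "card {u\<in>X. cnt (Rl l j) {u} (C l t j) < (rh l j - \<gamma>) * card (C l t j)} \<le> \<epsilon> * N l / (\<gamma> * \<alpha>)"
  proof (cases "C l t j = {}")
    case True then show ?thesis using eps0 N_nonneg gpos alpha_pos by (simp add: cnt_def)
  next
    case False
    have cpos: "real (card (C l t j)) > 0" using False fY by (simp add: card_gt_0_iff)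
    have "\<gamma> * card {u\<in>X. cnt (Rl l j) {u} (C l t j) < (rh l j - \<gamma>) * card (C l t j)} * card (C l t j) \<le> \<epsilon> * N l * N j"
      by (rule low_deg[OF fX fY gpos hl])
    then have "card {u\<in>X. cnt (Rl l j) {u} (C l t j) < (rh l j - \<gamma>) * card (C l t j)} \<le> \<epsilon> * N l * N j / (\<gamma> * card (C l t j))"
      using cpos gpos by (simp add: field_simps)
    then show ?thesis using r[OF False] by linarith
  qed
  show "card {u\<in>X. cnt (Rl l j) {u} (C l t j) > (rh l j + \<gamma>) * card (C l t j)} \<le> \<epsilon> * N l / (\<gamma> * \<alpha>)"
  proof (cases "C l t j = {}")
    case True then show ?thesis using eps0 N_nonneg gpos alpha_pos by (simp add: cnt_def)
  next
    case False
    have cpos: "real (card (C l t j)) > 0" using False fY by (simp add: card_gt_0_iff)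
    have "\<gamma> * card {u\<in>X. cnt (Rl l j) {u} (C l t j) > (rh l j + \<gamma>) * card (C l t j)} * card (C l t j) \<le> \<epsilon> * N l * N j"
      by (rule high_deg[OF fX fY gpos hh])
    then have "card {u\<in>X. cnt (Rl l j) {u} (C l t j) > (rh l j + \<gamma>) * card (C l t j)} \<le> \<epsilon> * N l * N j / (\<gamma> * card (C l t j))"
      using cpos gpos by (simp add: field_simps)
    then show ?thesis using r[OF False] by linarith
  qed
qed

lemma typ_bound:
  assumes l: "l < k" and inv: "Inv l t"
  shows "card (C l t l - Typ l t) \<le> \<beta> * card (C l t l)"
proof (cases "C l t l = {}")
  case True then show ?thesis by simp
next
  case False
  define Lo where "Lo j = {u\<in>C l t l. cnt (Rl l j) {u} (C l t j) < (rh l j - \<gamma>) * card (C l t j)}" for j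
  define Hi where "Hi j = {u\<in>C l t l. cnt (Rl l j) {u} (C l t j) > (rh l j + \<gamma>) * card (C l t j)}" for j
  have fC: "finite (C l t l)" using C_fin l by blast
  have sub: "C l t l - Typ l t \<subseteq> (\<Union>j\<in>{l<..<k}. Lo j \<union> Hi j)"
    unfolding Typ_def Lo_def Hi_def by (auto simp: not_le)
  have fin: "finite (Lo j \<union> Hi j)" for j unfolding Lo_def Hi_def using fC by simp
  have "card (C l t l - Typ l t) \<le> card (\<Union>j\<in>{l<..<k}. Lo j \<union> Hi j)"
    by (rule card_mono) (use fin sub in auto)
  also have "\<dots> \<le> (\<Sum>j\<in>{l<..<k}. card (Lo j \<union> Hi j))" by (rule card_UN_le) simp
  also have "\<dots> \<le> (\<Sum>j\<in>{l<..<k}. card (Lo j) + card (Hi j))" by (intro sum_mono card_Un_le)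
  finally have c1: "real (card (C l t l - Typ l t)) \<le> (\<Sum>j\<in>{l<..<k}. real (card (Lo j)) + real (card (Hi j)))"
    by (simp flip: of_nat_add of_nat_sum)
  have "(\<Sum>j\<in>{l<..<k}. real (card (Lo j)) + real (card (Hi j))) \<le> (\<Sum>j\<in>{l<..<k}. 2 * (\<epsilon> * N l / (\<gamma> * \<alpha>)))"
  proof (intro sum_mono)
    fix j assume j: "j \<in> {l<..<k}"
    show "real (card (Lo j)) + real (card (Hi j)) \<le> 2 * (\<epsilon> * N l / (\<gamma> * \<alpha>))"
      using add_mono[OF low_high_bound[OF l inv j order_refl False]] unfolding Lo_def Hi_def mult_2 .
  qed
  also have "\<dots> = card {l<..<k} * 2 * (\<epsilon> * N l / (\<gamma> * \<alpha>))" by simp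
  also have "\<dots> \<le> k * 2 * (\<epsilon> * N l / (\<gamma> * \<alpha>))"
    using eps0 N_nonneg gpos alpha_pos by (intro mult_right_mono) auto
  also have "k * 2 * (\<epsilon> * N l / (\<gamma> * \<alpha>)) = 2 * k * \<epsilon> * N l / (\<gamma> * \<alpha>)" by simp
  finally have c2: "real (card (C l t l - Typ l t)) \<le> 2 * k * \<epsilon> * N l / (\<gamma> * \<alpha>)" using c1 by linarith
  have Nl: "N l \<le> card (C l t l) / \<alpha>"
    using Inv_C[OF inv, of l] l alpha_pos by (simp add: field_simps)
  have "2 * k * \<epsilon> * N l / (\<gamma> * \<alpha>) \<le> 2 * k * \<epsilon> * (card (C l t l) / \<alpha>) / (\<gamma> * \<alpha>)"
    using Nl eps0 gpos alpha_pos by (intro divide_right_mono mult_left_mono) auto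
  also have "\<dots> = (2 * k * \<epsilon> / (\<gamma> * \<alpha>^2)) * card (C l t l)"
    by (simp add: power2_eq_square field_simps)
  also have "\<dots> \<le> \<beta> * card (C l t l)" using beta_ge by (intro mult_right_mono) auto
  finally show ?thesis using c2 by linarith
qed

end

lemma avg_nonneg: "(\<And>x. x \<in> S \<Longrightarrow> f x \<ge> 0) \<Longrightarrow> avg S f \<ge> 0"
  unfolding avg_def by (intro divide_nonneg_nonneg sum_nonneg) auto

lemma avg_le: assumes "finite S" "\<And>x. x \<in> S \<Longrightarrow> f x \<le> M" "M \<ge> 0" shows "avg S f \<le> M"
proof (cases "S = {}")
  case True then show ?thesis using assms by (simp add: avg_def)
next
  case False
  then have c: "real (card S) > 0" using assms by (simp add: card_gt_0_iff)
  have "sum f S \<le> card S * M" using sum_mono[of S f "\<lambda>_. M"] assms by simp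
  then show ?thesis unfolding avg_def using c by (simp add: divide_le_eq mult.commute)
qed

lemma avg_add: "avg S (\<lambda>x. f x + g x) = avg S f + avg S g"
  unfolding avg_def by (simp add: sum.distrib add_divide_distrib)

lemma avg_cmult: "avg S (\<lambda>x. c * f x) = c * avg S f"
  unfolding avg_def by (simp add: sum_distrib_left)

lemma avg2_nonneg: "(\<And>x y. x \<in> S \<Longrightarrow> y \<in> T \<Longrightarrow> F x y \<ge> 0) \<Longrightarrow> avg2 S T F \<ge> 0"
  unfolding avg2_def by (intro divide_nonneg_nonneg sum_nonneg) auto

lemma avg2_le: assumes "finite S" "finite T" "\<And>x y. x \<in> S \<Longrightarrow> y \<in> T \<Longrightarrow> F x y \<le> M" "M \<ge> 0"
  shows "avg2 S T F \<le> M"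
  unfolding avg2_as_avg[OF assms(1,2)] by (rule avg_le) (use assms in auto)

lemma exists_ge_avg:
  fixes f :: "'a \<Rightarrow> real" and c :: real
  assumes "finite X" "X \<noteq> {}" "(\<Sum>x\<in>X. f x) \<ge> card X * c"
  shows "\<exists>x\<in>X. f x \<ge> c"
proof (rule ccontr)
  assume "\<not> ?thesis"
  then have "\<forall>x\<in>X. f x < c" by auto
  then have "(\<Sum>x\<in>X. f x) < (\<Sum>x\<in>X. c)" using assms by (intro sum_strict_mono) auto
  then show False using assms by simp
qed

lemma num1:
  fixes a \<Phi> f \<delta> b :: real
  assumes "0 \<le> a" "a \<le> \<Phi>" "0 \<le> f" "f \<le> 1" "1 - \<delta> \<le> f" "0 \<le> b"
  shows "f * (a - b * \<Phi>) \<ge> a - (\<delta> + b) * \<Phi>"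
proof -
  have d: "\<delta> \<ge> 0" using assms by linarith
  have P: "\<Phi> \<ge> 0" using assms by linarith
  have "f * (b * \<Phi>) \<le> 1 * (b * \<Phi>)" using assms P by (intro mult_right_mono) auto
  moreover have "f * a \<ge> (1 - \<delta>) * a" using assms by (intro mult_right_mono) auto
  moreover have "\<delta> * a \<le> \<delta> * \<Phi>" using assms d by (intro mult_left_mono) auto
  ultimately show ?thesis by (simp add: algebra_simps)
qed

lemma frac_bound:
  fixes r \<gamma> \<tau> :: real
  assumes "\<tau> \<le> r" "0 < \<gamma>" "0 < \<tau>"
  shows "(r - \<gamma>) / (r + \<gamma>) \<ge> 1 - 2 * \<gamma> / \<tau>" "(r - \<gamma>) / (r + \<gamma>) \<le> 1"
proof -
  have rp: "r + \<gamma> > 0" using assms by simp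
  have "(r - \<gamma>) / (r + \<gamma>) = 1 - 2 * \<gamma> / (r + \<gamma>)" using rp by (simp add: field_simps)
  moreover have "2 * \<gamma> / (r + \<gamma>) \<le> 2 * \<gamma> / \<tau>" using assms rp by (intro divide_left_mono) auto
  ultimately show "(r - \<gamma>) / (r + \<gamma>) \<ge> 1 - 2 * \<gamma> / \<tau>" by simp
  show "(r - \<gamma>) / (r + \<gamma>) \<le> 1" using rp assms by simp
qed

lemma sub_avg:
  fixes \<phi> :: "'a \<Rightarrow> real" and \<beta> \<Phi> :: real
  assumes C: "finite C" and XC: "X \<subseteq> C" and cC: "card (C - X) \<le> \<beta> * card C" "card C \<le> 2 * card X"
    and phi: "\<And>x. x \<in> C \<Longrightarrow> 0 \<le> \<phi> x \<and> \<phi> x \<le> \<Phi>" and b: "\<beta> \<ge> 0"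
  shows "(\<Sum>x\<in>X. \<phi> x) \<ge> card X * (avg C \<phi> - 2 * \<beta> * \<Phi>)"
proof (cases "C = {}")
  case True then show ?thesis using XC by simp
next
  case False
  have cp: "real (card C) > 0" using False C by (simp add: card_gt_0_iff)
  have P: "\<Phi> \<ge> 0" using phi False by force
  have X: "finite X" using XC C finite_subset by auto
  have e: "(\<Sum>x\<in>X. \<phi> x) = (\<Sum>x\<in>C. \<phi> x) - (\<Sum>x\<in>C - X. \<phi> x)"
    using sum.subset_diff[OF XC C, of \<phi>] by simp
  have "(\<Sum>x\<in>C - X. \<phi> x) \<le> (\<Sum>x\<in>C - X. \<Phi>)" using phi by (intro sum_mono) auto
  also have "\<dots> = card (C - X) * \<Phi>" by simp
  also have "\<dots> \<le> \<beta> * card C * \<Phi>" using cC P by (intro mult_right_mono) auto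
  also have "\<dots> \<le> \<beta> * (2 * card X) * \<Phi>" using cC P b by (intro mult_right_mono mult_left_mono) auto
  finally have a1: "(\<Sum>x\<in>C - X. \<phi> x) \<le> 2 * \<beta> * card X * \<Phi>" by simp
  have s0: "(\<Sum>x\<in>C. \<phi> x) \<ge> 0" using phi by (intro sum_nonneg) auto
  have "card X * avg C \<phi> = (card X / card C) * (\<Sum>x\<in>C. \<phi> x)" unfolding avg_def by simp
  also have "\<dots> \<le> 1 * (\<Sum>x\<in>C. \<phi> x)"
    using s0 cp XC C by (intro mult_right_mono) (auto simp: divide_le_eq_1 card_mono)
  finally have a2: "card X * avg C \<phi> \<le> (\<Sum>x\<in>C. \<phi> x)" by simp
  show ?thesis using e a1 a2 by (simp add: algebra_simps)
qed

context emb begin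

lemma Bd_nonneg: "Bd \<ge> 0" using Fb[of undefined undefined] by linarith
lemma n_nonneg: "n \<ge> 0" unfolding n_def using N_nonneg by (intro sum_nonneg) auto

lemma typ_facts:
  assumes l: "l < k" and inv: "Inv l t" and ne: "Typ l t \<noteq> {}"
  shows "Typ l t \<subseteq> C l t l" "finite (Typ l t)" "card (C l t l - Typ l t) \<le> \<beta> * card (C l t l)"
    "card (C l t l) \<le> 2 * card (Typ l t)" "real (card (Typ l t)) \<ge> \<alpha> * N l / 2" "N l > 0"
    "real (card (Typ l t)) > 0"
proof -
  show XC: "Typ l t \<subseteq> C l t l" unfolding Typ_def by auto
  have fC: "finite (C l t l)" using C_fin l by blast
  show fX: "finite (Typ l t)" using XC fC finite_subset by blast
  show cb: "card (C l t l - Typ l t) \<le> \<beta> * card (C l t l)" by (rule typ_bound[OF l inv])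
  have "card (C l t l) = card (Typ l t) + card (C l t l - Typ l t)"
    using card_Diff_subset[OF fX XC] card_mono[OF fC XC] by simp
  then have "real (card (C l t l)) = card (Typ l t) + card (C l t l - Typ l t)" by simp
  moreover have "\<beta> * real (card (C l t l)) \<le> (1/2) * real (card (C l t l))"
    using beta_half by (intro mult_right_mono) auto
  ultimately have "real (card (C l t l)) \<le> real (2 * card (Typ l t))" using cb by simp
  then show c2: "card (C l t l) \<le> 2 * card (Typ l t)" by (simp only: of_nat_le_iff)
  show "real (card (Typ l t)) > 0" using ne fX by (simp add: card_gt_0_iff)
  have "real (card (C l t l)) \<ge> \<alpha> * N l" using Inv_C[OF inv] l by auto
  then show "real (card (Typ l t)) \<ge> \<alpha> * N l / 2" using c2 by simp
  have "C l t l \<noteq> {}" using ne XC by auto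
  then have "P l \<noteq> {}" using C_sub by blast
  then show "N l > 0" unfolding N_def using fin l by (simp add: card_gt_0_iff)
qed

lemma eps_ratio:
  assumes Nl: "N l > 0" and X: "real (card X) \<ge> \<alpha> * N l / 2" and Y: "real cY \<ge> \<alpha> * N j" and c: "c > 0"
  shows "\<epsilon> * N l * N j / (\<gamma> * c * card X) \<le> (2 * \<epsilon> / (\<gamma> * c * \<alpha>^2)) * cY"
proof -
  have a: "\<alpha> > 0" by (rule alpha_pos)
  have Xp: "real (card X) > 0" using X Nl a
    by (smt (verit, ccfv_threshold) divide_pos_pos mult_pos_pos)
  have "\<epsilon> * N l * N j / (\<gamma> * c * card X) \<le> \<epsilon> * N l * N j / (\<gamma> * c * (\<alpha> * N l / 2))"
    using X Xp Nl a gpos c eps0 N_nonneg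
    by (intro divide_left_mono mult_left_mono mult_nonneg_nonneg) (auto intro!: mult_pos_pos)
  also have "\<dots> = 2 * \<epsilon> * N j / (\<gamma> * c * \<alpha>)" using Nl by (simp add: field_simps)
  also have "\<dots> \<le> 2 * \<epsilon> * (cY / \<alpha>) / (\<gamma> * c * \<alpha>)"
  proof -
    have "N j \<le> cY / \<alpha>" using Y a by (simp add: field_simps)
    then show ?thesis using eps0 gpos c a by (intro divide_right_mono mult_left_mono) auto
  qed
  also have "\<dots> = (2 * \<epsilon> / (\<gamma> * c * \<alpha>^2)) * cY" by (simp add: power2_eq_square field_simps)
  finally show ?thesis .
qed

lemma two_eps_le_beta: "k \<ge> 1 \<Longrightarrow> 2 * \<epsilon> / (\<gamma> * 1 * \<alpha>^2) \<le> \<beta>"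
proof -
  assume k: "k \<ge> 1"
  have kk: "2 * \<epsilon> \<le> real (2 * k) * \<epsilon>" using k eps0 by (simp add: mult_right_mono)
  have "2 * \<epsilon> / (\<gamma> * 1 * \<alpha>^2) \<le> 2 * k * \<epsilon> / (\<gamma> * \<alpha>^2)"
    using divide_right_mono[OF kk, of "\<gamma> * \<alpha>^2"] gpos alpha_pos by simp
  then show ?thesis using beta_ge by linarith
qed

lemma two_eps_le_beta2: "k \<ge> 1 \<Longrightarrow> 2 * \<epsilon> / (\<gamma> * (\<tau> - \<gamma>) * \<alpha>^2) \<le> \<beta>"
proof -
  assume k: "k \<ge> 1"
  have p: "\<gamma> * (\<tau> - \<gamma>) * \<alpha>^2 > 0" using gpos tg alpha_pos by simp
  have kk: "2 * \<epsilon> \<le> real (4 * k) * \<epsilon>" using k eps0 by (simp add: mult_right_mono)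
  have "2 * \<epsilon> / (\<gamma> * (\<tau> - \<gamma>) * \<alpha>^2) \<le> 4 * k * \<epsilon> / (\<gamma> * (\<tau> - \<gamma>) * \<alpha>^2)"
    using kk p by (intro divide_right_mono) auto
  then show ?thesis unfolding beta_def .
qed

lemma bad_col:
  assumes l: "l < k" and inv: "Inv l t" and ne: "Typ l t \<noteq> {}" and j: "j \<in> {l<..<k}"
  shows "card {v\<in>C l t j. cnt (Rl l j) (Typ l t) {v} < (rh l j - \<gamma>) * card (Typ l t)} \<le> \<beta> * card (C l t j)"
proof -
  note tf = typ_facts[OF l inv ne]
  have jk: "j < k" "l \<noteq> j" using j by auto
  have fY: "finite (C l t j)" using C_fin jk by blast
  have XP: "Typ l t \<subseteq> P l" using tf(1) C_sub by blast
  have hl: "\<And>B. B \<subseteq> C l t j \<Longrightarrow> cnt (Rl l j) (Typ l t) B \<ge> rh l j * card (Typ l t) * card B - \<epsilon> * N l * N j"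
    using hom_Rl[OF l jk(1) jk(2) XP] C_sub by (smt (verit) order_trans)
  have "\<gamma> * card {v\<in>C l t j. cnt (Rl l j) (Typ l t) {v} < (rh l j - \<gamma>) * card (Typ l t)} * card (Typ l t) \<le> \<epsilon> * N l * N j"
    by (rule low_deg_col[OF tf(2) fY gpos hl])
  then have "card {v\<in>C l t j. cnt (Rl l j) (Typ l t) {v} < (rh l j - \<gamma>) * card (Typ l t)} \<le> \<epsilon> * N l * N j / (\<gamma> * 1 * card (Typ l t))"
    using tf(7) gpos by (simp add: field_simps)
  also have "\<dots> \<le> (2 * \<epsilon> / (\<gamma> * 1 * \<alpha>^2)) * card (C l t j)"
    by (rule eps_ratio[OF tf(6) tf(5)]) (use Inv_C[OF inv] l j in auto)
  also have "\<dots> \<le> \<beta> * card (C l t j)" using two_eps_le_beta l by (intro mult_right_mono) auto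
  finally show ?thesis .
qed

lemma step_C1:
  assumes l: "l < k" and inv: "Inv l t" and ne: "Typ l t \<noteq> {}" and j: "j \<in> {l<..<k}"
  shows "(\<Sum>u\<in>Typ l t. avg {v\<in>C l t j. Rl l j u v} (phi l t j))
     \<ge> card (Typ l t) * (avg (C l t j) (phi l t j) - (2 * \<gamma> / \<tau> + \<beta>) * (Bd * n * N j))"
proof -
  note tf = typ_facts[OF l inv ne]
  have jk: "j < k" using j by auto
  have fY: "finite (C l t j)" using C_fin jk by blast
  have Phi: "Bd * n * N j \<ge> 0" using Bd_nonneg n_nonneg N_nonneg by simp
  have ph: "\<forall>v\<in>C l t j. 0 \<le> phi l t j v \<and> phi l t j v \<le> Bd * n * N j"
    using phi_nonneg phi_le l by auto
  have rg: "0 \<le> rh l j - \<gamma>" "0 < rh l j + \<gamma>" using rh_bounds[of l j] tg gpos by auto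
  have up: "\<forall>u\<in>Typ l t. cnt (Rl l j) {u} (C l t j) \<le> (rh l j + \<gamma>) * card (C l t j)"
    using j unfolding Typ_def by auto
  have U: "(\<Sum>u\<in>Typ l t. avg {v\<in>C l t j. Rl l j u v} (phi l t j))
     \<ge> card (Typ l t) * ((rh l j - \<gamma>) / (rh l j + \<gamma>)) * (avg (C l t j) (phi l t j) - \<beta> * (Bd * n * N j))"
    by (rule unary_avg[OF tf(2) ne fY ph beta_nonneg Phi rg up bad_col[OF l inv ne j]])
  have a0: "avg (C l t j) (phi l t j) \<ge> 0" by (rule avg_nonneg) (use phi_nonneg in auto)
  have a1: "avg (C l t j) (phi l t j) \<le> Bd * n * N j" by (rule avg_le[OF fY]) (use ph Phi in auto)
  have fb: "(rh l j - \<gamma>) / (rh l j + \<gamma>) \<ge> 1 - 2 * \<gamma> / \<tau>" "(rh l j - \<gamma>) / (rh l j + \<gamma>) \<le> 1"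
    using frac_bound[of \<tau> "rh l j" \<gamma>] rh_bounds gpos tg by auto
  have f0: "(rh l j - \<gamma>) / (rh l j + \<gamma>) \<ge> 0" using rg by simp
  have "((rh l j - \<gamma>) / (rh l j + \<gamma>)) * (avg (C l t j) (phi l t j) - \<beta> * (Bd * n * N j))
      \<ge> avg (C l t j) (phi l t j) - (2 * \<gamma> / \<tau> + \<beta>) * (Bd * n * N j)"
    by (rule num1[OF a0 a1 f0 fb(2) fb(1) beta_nonneg])
  then have "card (Typ l t) * (((rh l j - \<gamma>) / (rh l j + \<gamma>)) * (avg (C l t j) (phi l t j) - \<beta> * (Bd * n * N j)))
      \<ge> card (Typ l t) * (avg (C l t j) (phi l t j) - (2 * \<gamma> / \<tau> + \<beta>) * (Bd * n * N j))"
    by (intro mult_left_mono) auto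
  then show ?thesis using U by (simp add: mult.assoc)
qed

end

context emb begin

lemma step_A:
  assumes l: "l < k" and inv: "Inv l t" and ne: "Typ l t \<noteq> {}"
  shows "(\<Sum>u\<in>Typ l t. phi l t l u) \<ge> card (Typ l t) * (avg (C l t l) (phi l t l) - 2 * \<beta> * (Bd * n * N l))"
proof -
  note tf = typ_facts[OF l inv ne]
  show ?thesis
    by (rule sub_avg[OF C_fin[OF l] tf(1) tf(3) tf(4) _ beta_nonneg]) (use phi_nonneg phi_le l in auto)
qed

lemma step_C2:
  assumes l: "l < k" and inv: "Inv l t" and ne: "Typ l t \<noteq> {}" and j: "j \<in> {l<..<k}"
  shows "(\<Sum>u\<in>Typ l t. lam l j * avg {v\<in>C l t j. Rl l j u v} (F u))
     \<ge> card (Typ l t) * (kap l j * avg2 (C l t l) (C l t j) F - N l * N j * Bd * (2 * \<gamma> / \<tau> + 2 * \<beta>))"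
proof -
  note tf = typ_facts[OF l inv ne]
  have jk: "j < k" using j by auto
  have fY: "finite (C l t j)" using C_fin jk by blast
  have up: "\<forall>u\<in>Typ l t. cnt (Rl l j) {u} (C l t j) \<le> (rh l j + \<gamma>) * card (C l t j)"
    using j unfolding Typ_def by auto
  have zero: "\<forall>u\<in>C l t l. \<forall>v\<in>C l t j. \<not> Rl l j u v \<longrightarrow> F u v = 0"
    unfolding Rl_def using F0 by auto
  have rp: "rh l j > 0" using rh_bounds[of l j] tg by linarith
  have L: "(\<Sum>u\<in>Typ l t. kap l j * rh l j * avg {v\<in>C l t j. Rl l j u v} (F u))
     \<ge> card (Typ l t) * (kap l j * avg2 (C l t l) (C l t j) F - kap l j * Bd * (2 * \<gamma> / rh l j + 2 * \<beta>))"
    by (rule lift_avg[OF C_fin[OF l] tf(1) ne fY _ zero up rp _ kap_nonneg Bd_nonneg beta_nonneg tf(3) tf(4)])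
       (use Fb gpos in auto)
  have "kap l j * Bd * (2 * \<gamma> / rh l j + 2 * \<beta>) \<le> N l * N j * Bd * (2 * \<gamma> / \<tau> + 2 * \<beta>)"
  proof (intro mult_mono add_mono)
    show "kap l j \<le> N l * N j" by (rule kap_le)
    show "2 * \<gamma> / rh l j \<le> 2 * \<gamma> / \<tau>" using rh_bounds[of l j] tg gpos by (intro divide_left_mono) auto
  qed (use Bd_nonneg N_nonneg kap_nonneg gpos rp beta_nonneg in auto)
  then have "card (Typ l t) * (kap l j * avg2 (C l t l) (C l t j) F - kap l j * Bd * (2 * \<gamma> / rh l j + 2 * \<beta>))
      \<ge> card (Typ l t) * (kap l j * avg2 (C l t l) (C l t j) F - N l * N j * Bd * (2 * \<gamma> / \<tau> + 2 * \<beta>))"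
    by (intro mult_left_mono) auto
  then show ?thesis using L unfolding lam_def by simp
qed

lemma step_D:
  assumes l: "l < k" and inv: "Inv l t" and ne: "Typ l t \<noteq> {}" and i: "i \<in> {l<..<k}" and j: "j \<in> {i<..<k}"
  shows "(\<Sum>u\<in>Typ l t. kap i j * avg2 {v\<in>C l t i. Rl l i u v} {w\<in>C l t j. Rl l j u w} F)
     \<ge> card (Typ l t) * (kap i j * avg2 (C l t i) (C l t j) F - N i * N j * Bd * (4 * \<gamma> / \<tau> + \<beta>))"
proof -
  note tf = typ_facts[OF l inv ne]
  have ik: "i < k" "l \<noteq> i" "l < i" using i by auto
  have jk: "j < k" "l \<noteq> j" "l < j" using i j by auto
  have k1: "k \<ge> 1" using l by simp
  have fY: "finite (C l t i)" using C_fin ik by blast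
  have fZ: "finite (C l t j)" using C_fin jk by blast
  have fP: "finite (P l)" using fin l by blast
  have XP: "Typ l t \<subseteq> P l" using tf(1) C_sub by blast
  let ?r1 = "rh l i" and ?r2 = "rh l j"
  have r1: "\<tau> \<le> ?r1" "?r1 \<le> 1" and r2: "\<tau> \<le> ?r2" "?r2 \<le> 1" using rh_bounds by auto
  have up1: "\<forall>u\<in>Typ l t. cnt (Rl l i) {u} (C l t i) \<le> (?r1 + \<gamma>) * card (C l t i)"
    using i unfolding Typ_def by auto
  have up2: "\<forall>u\<in>Typ l t. cnt (Rl l j) {u} (C l t j) \<le> (?r2 + \<gamma>) * card (C l t j)"
    using jk unfolding Typ_def by auto
  have hom1: "\<And>A B. A \<subseteq> P l \<Longrightarrow> B \<subseteq> C l t i \<Longrightarrow> cnt (Rl l i) A B \<ge> ?r1 * card A * card B - \<epsilon> * N l * N i"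
    using hom_Rl[OF l ik(1) ik(2)] C_sub by (smt (verit) order_trans)
  have hom2: "\<And>A B. A \<subseteq> P l \<Longrightarrow> B \<subseteq> C l t j \<Longrightarrow> cnt (Rl l j) A B \<ge> ?r2 * card A * card B - \<epsilon> * N l * N j"
    using hom_Rl[OF l jk(1) jk(2)] C_sub by (smt (verit) order_trans)
  have g1: "?r1 - \<gamma> > 0" "?r2 - \<gamma> \<ge> 0" using r1 r2 tg by auto
  have bp: "card {p\<in>C l t i \<times> C l t j. card {u\<in>Typ l t. Rl l i u (fst p) \<and> Rl l j u (snd p)} < (?r1 - \<gamma>) * (?r2 - \<gamma>) * card (Typ l t)}
          \<le> \<epsilon> * N l * N i * card (C l t j) / (\<gamma> * card (Typ l t)) + card (C l t i) * (\<epsilon> * N l * N j) / (\<gamma> * (?r1 - \<gamma>) * card (Typ l t))"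
    by (rule bad_pairs[OF XP fP fY fZ ne hom1 hom2 gpos g1])
  define q where "q = 2 * \<epsilon> / (\<gamma> * (\<tau> - \<gamma>) * \<alpha>^2)"
  have q2: "2 * q \<le> \<beta>"
  proof -
    have p: "\<gamma> * (\<tau> - \<gamma>) * \<alpha>^2 > 0" using gpos tg alpha_pos by simp
    have kk: "4 * \<epsilon> \<le> real (4 * k) * \<epsilon>" using k1 eps0 by (simp add: mult_right_mono)
    have "2 * q = 4 * \<epsilon> / (\<gamma> * (\<tau> - \<gamma>) * \<alpha>^2)" unfolding q_def by simp
    also have "\<dots> \<le> 4 * k * \<epsilon> / (\<gamma> * (\<tau> - \<gamma>) * \<alpha>^2)" using divide_right_mono[OF kk, of "\<gamma> * (\<tau> - \<gamma>) * \<alpha>^2"] p by simp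
    finally show ?thesis unfolding beta_def .
  qed
  have ci: "real (card (C l t i)) \<ge> \<alpha> * N i" and cj: "real (card (C l t j)) \<ge> \<alpha> * N j"
    using Inv_C[OF inv] l ik jk by auto
  have t1: "\<epsilon> * N l * N i * card (C l t j) / (\<gamma> * card (Typ l t)) \<le> q * (card (C l t i) * card (C l t j))"
  proof -
    have "\<epsilon> * N l * N i / (\<gamma> * 1 * card (Typ l t)) \<le> (2 * \<epsilon> / (\<gamma> * 1 * \<alpha>^2)) * card (C l t i)"
      by (rule eps_ratio[OF tf(6) tf(5) ci]) simp
    also have "\<dots> \<le> q * card (C l t i)"
    proof (intro mult_right_mono)
      have p1: "\<gamma> * (\<tau> - \<gamma>) * \<alpha>^2 > 0" using gpos tg alpha_pos by simp
      have "\<gamma> * (\<tau> - \<gamma>) * \<alpha>^2 \<le> \<gamma> * 1 * \<alpha>^2" using tg gpos alpha_pos by (intro mult_right_mono mult_left_mono) auto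
      then show "2 * \<epsilon> / (\<gamma> * 1 * \<alpha>^2) \<le> q" unfolding q_def using p1 eps0 by (intro divide_left_mono) auto
    qed simp
    finally have "\<epsilon> * N l * N i / (\<gamma> * card (Typ l t)) \<le> q * card (C l t i)" by simp
    then have "\<epsilon> * N l * N i / (\<gamma> * card (Typ l t)) * card (C l t j) \<le> q * card (C l t i) * card (C l t j)"
      by (intro mult_right_mono) auto
    then show ?thesis by (simp add: mult.assoc)
  qed
  have t2: "card (C l t i) * (\<epsilon> * N l * N j) / (\<gamma> * (?r1 - \<gamma>) * card (Typ l t)) \<le> q * (card (C l t i) * card (C l t j))"
  proof -
    have "\<epsilon> * N l * N j / (\<gamma> * (?r1 - \<gamma>) * card (Typ l t)) \<le> (2 * \<epsilon> / (\<gamma> * (?r1 - \<gamma>) * \<alpha>^2)) * card (C l t j)"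
      by (rule eps_ratio[OF tf(6) tf(5) cj g1(1)])
    also have "\<dots> \<le> q * card (C l t j)"
    proof (intro mult_right_mono)
      have p1: "\<gamma> * (\<tau> - \<gamma>) * \<alpha>^2 > 0" using gpos tg alpha_pos by simp
      have "\<gamma> * (\<tau> - \<gamma>) * \<alpha>^2 \<le> \<gamma> * (?r1 - \<gamma>) * \<alpha>^2" using r1 gpos alpha_pos by (intro mult_right_mono mult_left_mono) auto
      then show "2 * \<epsilon> / (\<gamma> * (?r1 - \<gamma>) * \<alpha>^2) \<le> q" unfolding q_def using p1 eps0 by (intro divide_left_mono) auto
    qed simp
    finally have "\<epsilon> * N l * N j / (\<gamma> * (?r1 - \<gamma>) * card (Typ l t)) \<le> q * card (C l t j)" .
    then have "card (C l t i) * (\<epsilon> * N l * N j / (\<gamma> * (?r1 - \<gamma>) * card (Typ l t))) \<le> card (C l t i) * (q * card (C l t j))"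
      by (intro mult_left_mono) auto
    then show ?thesis by (simp add: algebra_simps)
  qed
  have bad: "card {p\<in>C l t i \<times> C l t j. card {u\<in>Typ l t. Rl l i u (fst p) \<and> Rl l j u (snd p)} < (?r1 - \<gamma>) * (?r2 - \<gamma>) * card (Typ l t)}
      \<le> \<beta> * (card (C l t i) * card (C l t j))"
  proof -
    have "2 * q * (card (C l t i) * card (C l t j)) \<le> \<beta> * (card (C l t i) * card (C l t j))"
      using q2 by (intro mult_right_mono) auto
    then show ?thesis using bp t1 t2 by linarith
  qed
  have rg: "0 \<le> ?r1 - \<gamma>" "0 < ?r1 + \<gamma>" "0 \<le> ?r2 - \<gamma>" "0 < ?r2 + \<gamma>" using g1 gpos by auto
  have PA: "(\<Sum>u\<in>Typ l t. avg2 {v\<in>C l t i. Rl l i u v} {w\<in>C l t j. Rl l j u w} F)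
          \<ge> card (Typ l t) * ((?r1 - \<gamma>) * (?r2 - \<gamma>) / ((?r1 + \<gamma>) * (?r2 + \<gamma>))) * (avg2 (C l t i) (C l t j) F - \<beta> * Bd)"
    by (rule pair_avg[OF tf(2) ne fY fZ _ beta_nonneg Bd_nonneg rg up1 up2 bad]) (use Fb in auto)
  define f where "f = (?r1 - \<gamma>) * (?r2 - \<gamma>) / ((?r1 + \<gamma>) * (?r2 + \<gamma>))"
  have fe: "f = ((?r1 - \<gamma>) / (?r1 + \<gamma>)) * ((?r2 - \<gamma>) / (?r2 + \<gamma>))" unfolding f_def by simp
  have fb1: "(?r1 - \<gamma>) / (?r1 + \<gamma>) \<ge> 1 - 2 * \<gamma> / \<tau>" "(?r1 - \<gamma>) / (?r1 + \<gamma>) \<le> 1"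
    using frac_bound[of \<tau> ?r1 \<gamma>] r1 gpos tg by auto
  have fb2: "(?r2 - \<gamma>) / (?r2 + \<gamma>) \<ge> 1 - 2 * \<gamma> / \<tau>" "(?r2 - \<gamma>) / (?r2 + \<gamma>) \<le> 1"
    using frac_bound[of \<tau> ?r2 \<gamma>] r2 gpos tg by auto
  have x1: "2 * \<gamma> / \<tau> \<le> 1" using g2 tg by simp
  have x0: "2 * \<gamma> / \<tau> \<ge> 0" using gpos tg by simp
  have f0: "f \<ge> 0" unfolding f_def using rg by simp
  have f1: "f \<le> 1" unfolding fe using fb1 fb2 rg by (intro mult_le_one) auto
  have fl: "f \<ge> 1 - 4 * \<gamma> / \<tau>"
  proof -
    have "(1 - 2 * \<gamma> / \<tau>) * (1 - 2 * \<gamma> / \<tau>) \<le> f" unfolding fe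
      using fb1 fb2 x1 by (intro mult_mono) auto
    moreover have "(1 - 2 * \<gamma> / \<tau>) * (1 - 2 * \<gamma> / \<tau>) \<ge> 1 - 4 * \<gamma> / \<tau>"
    proof -
      have "(1 - 2 * \<gamma> / \<tau>) * (1 - 2 * \<gamma> / \<tau>) = 1 - 2 * (2 * \<gamma> / \<tau>) + (2 * \<gamma> / \<tau>) * (2 * \<gamma> / \<tau>)"
        by (simp add: algebra_simps)
      moreover have "(2 * \<gamma> / \<tau>) * (2 * \<gamma> / \<tau>) \<ge> 0" using x0 by simp
      ultimately show ?thesis by simp
    qed
    ultimately show ?thesis by linarith
  qed
  have a0: "avg2 (C l t i) (C l t j) F \<ge> 0" by (rule avg2_nonneg) (use Fb in auto)
  have a1: "avg2 (C l t i) (C l t j) F \<le> Bd" by (rule avg2_le[OF fY fZ]) (use Fb Bd_nonneg in auto)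
  have nm: "f * (avg2 (C l t i) (C l t j) F - \<beta> * Bd) \<ge> avg2 (C l t i) (C l t j) F - (4 * \<gamma> / \<tau> + \<beta>) * Bd"
    by (rule num1[OF a0 a1 f0 f1 fl beta_nonneg])
  have "(\<Sum>u\<in>Typ l t. kap i j * avg2 {v\<in>C l t i. Rl l i u v} {w\<in>C l t j. Rl l j u w} F)
      = kap i j * (\<Sum>u\<in>Typ l t. avg2 {v\<in>C l t i. Rl l i u v} {w\<in>C l t j. Rl l j u w} F)"
    by (simp add: sum_distrib_left)
  also have "\<dots> \<ge> kap i j * (card (Typ l t) * f * (avg2 (C l t i) (C l t j) F - \<beta> * Bd))"
    using PA kap_nonneg unfolding f_def by (intro mult_left_mono) auto
  finally have s1: "(\<Sum>u\<in>Typ l t. kap i j * avg2 {v\<in>C l t i. Rl l i u v} {w\<in>C l t j. Rl l j u w} F)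
      \<ge> kap i j * (card (Typ l t) * f * (avg2 (C l t i) (C l t j) F - \<beta> * Bd))" .
  have s2: "kap i j * (card (Typ l t) * f * (avg2 (C l t i) (C l t j) F - \<beta> * Bd))
      \<ge> kap i j * (card (Typ l t) * (avg2 (C l t i) (C l t j) F - (4 * \<gamma> / \<tau> + \<beta>) * Bd))"
    using nm kap_nonneg by (simp add: mult.assoc mult_left_mono)
  have s3: "kap i j * ((4 * \<gamma> / \<tau> + \<beta>) * Bd) \<le> N i * N j * Bd * (4 * \<gamma> / \<tau> + \<beta>)"
  proof -
    have "kap i j * ((4 * \<gamma> / \<tau> + \<beta>) * Bd) \<le> (N i * N j) * ((4 * \<gamma> / \<tau> + \<beta>) * Bd)"
      using kap_le gpos tg beta_nonneg Bd_nonneg by (intro mult_right_mono) auto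
    then show ?thesis by (simp add: algebra_simps)
  qed
  have "kap i j * (card (Typ l t) * (avg2 (C l t i) (C l t j) F - (4 * \<gamma> / \<tau> + \<beta>) * Bd))
     = card (Typ l t) * (kap i j * avg2 (C l t i) (C l t j) F - kap i j * ((4 * \<gamma> / \<tau> + \<beta>) * Bd))"
    by (simp add: algebra_simps)
  also have "\<dots> \<ge> card (Typ l t) * (kap i j * avg2 (C l t i) (C l t j) F - N i * N j * Bd * (4 * \<gamma> / \<tau> + \<beta>))"
    using s3 by (intro mult_left_mono) auto
  finally show ?thesis using s1 s2 by linarith
qed

end

context emb begin

lemma Suc_J: "{Suc l..<k} = {l<..<k}" by auto

lemma T_Suc:
  "T (Suc l) (t(l := u)) = Rz l t + phi l t l u
     + (\<Sum>j\<in>{l<..<k}. avg {v\<in>C l t j. Rl l j u v} (phi l t j))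
     + (\<Sum>j\<in>{l<..<k}. lam l j * avg {v\<in>C l t j. Rl l j u v} (F u))
     + (\<Sum>i\<in>{l<..<k}. \<Sum>j\<in>{i<..<k}. kap i j * avg2 {v\<in>C l t i. Rl l i u v} {v\<in>C l t j. Rl l j u v} F)"
proof -
  have ph: "phi (Suc l) (t(l := u)) j = (\<lambda>v. phi l t j v + lam l j * F u v)" for j
    by (intro ext) (rule phi_Suc)
  have U: "U (Suc l) (t(l := u)) = (\<Sum>j\<in>{l<..<k}. avg {v\<in>C l t j. Rl l j u v} (phi l t j))
     + (\<Sum>j\<in>{l<..<k}. lam l j * avg {v\<in>C l t j. Rl l j u v} (F u))"
    unfolding U_def Suc_J C_Suc ph avg_add avg_cmult by (simp add: sum.distrib)
  have P: "Pr (Suc l) (t(l := u)) = (\<Sum>i\<in>{l<..<k}. \<Sum>j\<in>{i<..<k}. kap i j * avg2 {v\<in>C l t i. Rl l i u v} {v\<in>C l t j. Rl l j u v} F)"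
    unfolding Pr_def Suc_J C_Suc ..
  show ?thesis unfolding T_def Rz_Suc U P by simp
qed

lemma J_split: "l < k \<Longrightarrow> {l..<k} = insert l {l<..<k}" by auto

lemma T_split:
  assumes "l < k"
  shows "T l t = Rz l t + avg (C l t l) (phi l t l)
     + (\<Sum>j\<in>{l<..<k}. avg (C l t j) (phi l t j))
     + (\<Sum>j\<in>{l<..<k}. kap l j * avg2 (C l t l) (C l t j) F)
     + (\<Sum>i\<in>{l<..<k}. \<Sum>j\<in>{i<..<k}. kap i j * avg2 (C l t i) (C l t j) F)"
  unfolding T_def U_def Pr_def J_split[OF assms] by simp

lemma sumJ_le: "(\<Sum>j\<in>{l<..<k}. N j) \<le> n"
  unfolding n_def using N_nonneg by (intro sum_mono2) auto

lemma sumJJ_le: "(\<Sum>i\<in>{l<..<k}. \<Sum>j\<in>{i<..<k}. N i * N j) \<le> n * n"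
proof -
  have "(\<Sum>i\<in>{l<..<k}. \<Sum>j\<in>{i<..<k}. N i * N j) \<le> (\<Sum>i\<in>{l<..<k}. \<Sum>j<k. N i * N j)"
    using N_nonneg by (intro sum_mono sum_mono2) auto
  also have "\<dots> \<le> (\<Sum>i<k. \<Sum>j<k. N i * N j)"
    using N_nonneg by (intro sum_mono2 sum_nonneg) auto
  also have "\<dots> = n * n" unfolding n_def by (simp add: sum_product)
  finally show ?thesis .
qed

lemma Err_bound:
  assumes l: "l < k"
  shows "2 * \<beta> * (Bd * n * N l) + (\<Sum>j\<in>{l<..<k}. (2 * \<gamma> / \<tau> + \<beta>) * (Bd * n * N j))
     + (\<Sum>j\<in>{l<..<k}. N l * N j * Bd * (2 * \<gamma> / \<tau> + 2 * \<beta>))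
     + (\<Sum>i\<in>{l<..<k}. \<Sum>j\<in>{i<..<k}. N i * N j * Bd * (4 * \<gamma> / \<tau> + \<beta>))
     \<le> Bd * n^2 * (8 * \<gamma> / \<tau> + 6 * \<beta>)"
proof -
  have b0: "\<beta> \<ge> 0" by (rule beta_nonneg)
  have g0: "\<gamma> / \<tau> \<ge> 0" using gpos tg by simp
  have B0: "Bd \<ge> 0" by (rule Bd_nonneg)
  have n0: "n \<ge> 0" by (rule n_nonneg)
  have Nl: "N l \<le> n" using N_le_n l by simp
  have e1: "2 * \<beta> * (Bd * n * N l) \<le> 2 * \<beta> * (Bd * n * n)"
    using b0 B0 n0 Nl by (intro mult_left_mono) auto
  have e2: "(\<Sum>j\<in>{l<..<k}. (2 * \<gamma> / \<tau> + \<beta>) * (Bd * n * N j)) \<le> (2 * \<gamma> / \<tau> + \<beta>) * (Bd * n * n)"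
  proof -
    have "(\<Sum>j\<in>{l<..<k}. (2 * \<gamma> / \<tau> + \<beta>) * (Bd * n * N j)) = (2 * \<gamma> / \<tau> + \<beta>) * (Bd * n) * (\<Sum>j\<in>{l<..<k}. N j)"
      by (simp add: sum_distrib_left mult.assoc)
    also have "\<dots> \<le> (2 * \<gamma> / \<tau> + \<beta>) * (Bd * n) * n"
      using sumJ_le b0 g0 B0 n0 by (intro mult_left_mono) auto
    finally show ?thesis by (simp add: mult.assoc)
  qed
  have e3: "(\<Sum>j\<in>{l<..<k}. N l * N j * Bd * (2 * \<gamma> / \<tau> + 2 * \<beta>)) \<le> (2 * \<gamma> / \<tau> + 2 * \<beta>) * (Bd * n * n)"
  proof -
    have "(\<Sum>j\<in>{l<..<k}. N l * N j * Bd * (2 * \<gamma> / \<tau> + 2 * \<beta>)) = (\<Sum>j\<in>{l<..<k}. ((2 * \<gamma> / \<tau> + 2 * \<beta>) * Bd * N l) * N j)"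
      by (rule sum.cong) (auto simp: algebra_simps)
    also have "\<dots> = (2 * \<gamma> / \<tau> + 2 * \<beta>) * Bd * N l * (\<Sum>j\<in>{l<..<k}. N j)"
      by (rule sum_distrib_left[symmetric])
    also have "\<dots> \<le> (2 * \<gamma> / \<tau> + 2 * \<beta>) * Bd * n * n"
      using sumJ_le b0 g0 B0 n0 Nl N_nonneg sum_nonneg[of "{l<..<k}" N] by (intro mult_mono mult_nonneg_nonneg) auto
    finally show ?thesis by (simp add: algebra_simps)
  qed
  have e4: "(\<Sum>i\<in>{l<..<k}. \<Sum>j\<in>{i<..<k}. N i * N j * Bd * (4 * \<gamma> / \<tau> + \<beta>)) \<le> (4 * \<gamma> / \<tau> + \<beta>) * (Bd * n * n)"
  proof -
    have "(\<Sum>i\<in>{l<..<k}. \<Sum>j\<in>{i<..<k}. N i * N j * Bd * (4 * \<gamma> / \<tau> + \<beta>))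
        = (\<Sum>i\<in>{l<..<k}. \<Sum>j\<in>{i<..<k}. (Bd * (4 * \<gamma> / \<tau> + \<beta>)) * (N i * N j))"
      by (intro sum.cong) (auto simp: algebra_simps)
    also have "\<dots> = Bd * (4 * \<gamma> / \<tau> + \<beta>) * (\<Sum>i\<in>{l<..<k}. \<Sum>j\<in>{i<..<k}. N i * N j)"
      by (simp only: sum_distrib_left)
    also have "\<dots> \<le> Bd * (4 * \<gamma> / \<tau> + \<beta>) * (n * n)"
      using sumJJ_le b0 g0 B0 by (intro mult_left_mono) auto
    finally show ?thesis by (simp add: algebra_simps)
  qed
  have "2 * \<beta> * (Bd * n * n) + (2 * \<gamma> / \<tau> + \<beta>) * (Bd * n * n) + (2 * \<gamma> / \<tau> + 2 * \<beta>) * (Bd * n * n)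
      + (4 * \<gamma> / \<tau> + \<beta>) * (Bd * n * n) = Bd * n^2 * (8 * \<gamma> / \<tau> + 6 * \<beta>)"
    by (simp add: power2_eq_square algebra_simps)
  then show ?thesis using e1 e2 e3 e4 by linarith
qed

end

lemma sum_cmult_diff: "(\<Sum>j\<in>A. (c::real) * (f j - g j)) = c * (\<Sum>j\<in>A. f j) - c * (\<Sum>j\<in>A. g j)"
  by (simp only: right_diff_distrib sum_subtractf sum_distrib_left)

lemma sum_cmult_diff2: "(\<Sum>i\<in>A. \<Sum>j\<in>B i. (c::real) * (f i j - g i j)) = c * (\<Sum>i\<in>A. \<Sum>j\<in>B i. f i j) - c * (\<Sum>i\<in>A. \<Sum>j\<in>B i. g i j)"
  by (simp only: right_diff_distrib sum_subtractf sum_distrib_left)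

lemma lin_aux: "(c::real) * R + c * (a - e) + (c * x1 - c * x2) + (c * x3 - c * x4) + (c * x5 - c * x6) = c * ((R + a + x1 + x3 + x5) - (e + x2 + x4 + x6))"
  by (simp add: algebra_simps)

context emb begin

lemma Inv_Suc:
  assumes l: "l < k" and inv: "Inv l t" and u: "u \<in> Typ l t"
  shows "Inv (Suc l) (t(l := u))"
  unfolding Inv_def
proof
  fix j assume j: "j \<in> {Suc l..<k}"
  then have jJ: "j \<in> {l<..<k}" by auto
  have fY: "finite (C l t j)" using C_fin j by auto
  have c: "cnt (Rl l j) {u} (C l t j) \<ge> (rh l j - \<gamma>) * card (C l t j)" using u jJ unfolding Typ_def by auto
  have "(\<tau> - \<gamma>) * card (C l t j) \<le> (rh l j - \<gamma>) * card (C l t j)" using rh_bounds[of l j] by (intro mult_right_mono) auto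
  moreover have "(\<tau> - \<gamma>) ^ Suc l * N j \<le> (\<tau> - \<gamma>) * card (C l t j)"
  proof -
    have "(\<tau> - \<gamma>) ^ l * N j \<le> card (C l t j)" using inv j unfolding Inv_def by auto
    then have "(\<tau> - \<gamma>) * ((\<tau> - \<gamma>) ^ l * N j) \<le> (\<tau> - \<gamma>) * card (C l t j)" using tg by (intro mult_left_mono) auto
    then show ?thesis by (simp add: mult.assoc)
  qed
  ultimately show "(\<tau> - \<gamma>) ^ Suc l * N j \<le> real (card (C (Suc l) (t(l := u)) j))"
    using c unfolding C_Suc cnt_single[OF fY] by linarith
qed

lemma Est_nonneg: "Bd * n^2 * (8 * \<gamma> / \<tau> + 6 * \<beta>) \<ge> 0"
  using Bd_nonneg beta_nonneg gpos tg by (intro mult_nonneg_nonneg) auto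

lemma step_empty:
  assumes l: "l < k" and inv: "Inv l t" and e: "C l t l = {}"
  shows "Inv (Suc l) (t(l := u)) \<and> T (Suc l) (t(l := u)) \<ge> T l t - Bd * n^2 * (8 * \<gamma> / \<tau> + 6 * \<beta>)"
proof -
  have "(\<tau> - \<gamma>) ^ l * N l \<le> real (card (C l t l))" using inv l unfolding Inv_def by auto
  then have "(\<tau> - \<gamma>) ^ l * N l \<le> 0" using e by simp
  moreover have "(\<tau> - \<gamma>) ^ l > 0" using tg by simp
  ultimately have Nl: "N l = 0" using N_nonneg[of l]
    by (smt (verit, best) mult_pos_pos)
  have nH: "\<not> Hr l j" "\<not> Hr j l" for j using Hne[of l j] Nl Hsym[of l j] unfolding N_def by auto
  have R: "Rl l j = (\<lambda>_ _. True)" for j unfolding Rl_def using nH by auto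
  have kz: "kap l j = 0" "lam l j = 0" "lam j l = 0" for j unfolding lam_def kap_def using nH by auto
  have ph: "phi l t l u = 0" unfolding phi_def using kz by simp
  have T1: "T (Suc l) (t(l := u)) = T l t"
    unfolding T_Suc T_split[OF l] R kz ph e by (simp add: avg_def)
  have inv2: "Inv (Suc l) (t(l := u))"
    unfolding Inv_def
  proof
    fix j assume j: "j \<in> {Suc l..<k}"
    have "(\<tau> - \<gamma>) ^ l * N j \<le> card (C l t j)" using inv j unfolding Inv_def by auto
    moreover have "(\<tau> - \<gamma>) ^ Suc l * N j \<le> (\<tau> - \<gamma>) ^ l * N j"
      using tg N_nonneg by (intro mult_right_mono power_decreasing) auto
    ultimately show "(\<tau> - \<gamma>) ^ Suc l * N j \<le> real (card (C (Suc l) (t(l := u)) j))"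
      unfolding C_Suc R by simp
  qed
  show ?thesis using T1 inv2 Est_nonneg by simp
qed

lemma step:
  assumes l: "l < k" and inv: "Inv l t"
  shows "\<exists>u. Inv (Suc l) (t(l := u)) \<and> T (Suc l) (t(l := u)) \<ge> T l t - Bd * n^2 * (8 * \<gamma> / \<tau> + 6 * \<beta>)"
proof (cases "C l t l = {}")
  case True then show ?thesis using step_empty[OF l inv] by blast
next
  case False
  define X where "X = Typ l t"
  define J where "J = {l<..<k}"
  have fC: "finite (C l t l)" using C_fin l by blast
  have ne: "X \<noteq> {}"
  proof
    assume "X = {}"
    then have "card (C l t l) \<le> \<beta> * card (C l t l)" using typ_bound[OF l inv] unfolding X_def by simp
    moreover have "\<beta> * real (card (C l t l)) \<le> (1/2) * card (C l t l)" using beta_half by (intro mult_right_mono) auto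
    moreover have "real (card (C l t l)) > 0" using False fC by (simp add: card_gt_0_iff)
    ultimately show False by simp
  qed
  note tf = typ_facts[OF l inv ne[unfolded X_def]]
  have fX: "finite X" using tf unfolding X_def by simp
  let ?Cp = "\<lambda>j u. {v\<in>C l t j. Rl l j u v}"
  have S: "(\<Sum>u\<in>X. T (Suc l) (t(l := u))) = card X * Rz l t + (\<Sum>u\<in>X. phi l t l u)
     + (\<Sum>j\<in>J. \<Sum>u\<in>X. avg (?Cp j u) (phi l t j))
     + (\<Sum>j\<in>J. \<Sum>u\<in>X. lam l j * avg (?Cp j u) (F u))
     + (\<Sum>i\<in>J. \<Sum>j\<in>{i<..<k}. \<Sum>u\<in>X. kap i j * avg2 (?Cp i u) (?Cp j u) F)"
  proof -
    have "(\<Sum>u\<in>X. T (Suc l) (t(l := u))) = (\<Sum>u\<in>X. Rz l t) + (\<Sum>u\<in>X. phi l t l u)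
     + (\<Sum>u\<in>X. \<Sum>j\<in>J. avg (?Cp j u) (phi l t j))
     + (\<Sum>u\<in>X. \<Sum>j\<in>J. lam l j * avg (?Cp j u) (F u))
     + (\<Sum>u\<in>X. \<Sum>i\<in>J. \<Sum>j\<in>{i<..<k}. kap i j * avg2 (?Cp i u) (?Cp j u) F)"
      unfolding T_Suc J_def by (simp only: sum.distrib)
    also have "(\<Sum>u\<in>X. \<Sum>i\<in>J. \<Sum>j\<in>{i<..<k}. kap i j * avg2 (?Cp i u) (?Cp j u) F)
        = (\<Sum>i\<in>J. \<Sum>u\<in>X. \<Sum>j\<in>{i<..<k}. kap i j * avg2 (?Cp i u) (?Cp j u) F)" by (rule sum.swap)
    also have "\<dots> = (\<Sum>i\<in>J. \<Sum>j\<in>{i<..<k}. \<Sum>u\<in>X. kap i j * avg2 (?Cp i u) (?Cp j u) F)"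
      by (intro sum.cong refl sum.swap)
    finally have H: "(\<Sum>u\<in>X. T (Suc l) (t(l := u))) = (\<Sum>u\<in>X. Rz l t) + (\<Sum>u\<in>X. phi l t l u)
     + (\<Sum>u\<in>X. \<Sum>j\<in>J. avg (?Cp j u) (phi l t j))
     + (\<Sum>u\<in>X. \<Sum>j\<in>J. lam l j * avg (?Cp j u) (F u))
     + (\<Sum>i\<in>J. \<Sum>j\<in>{i<..<k}. \<Sum>u\<in>X. kap i j * avg2 (?Cp i u) (?Cp j u) F)" .
    have sw1: "(\<Sum>u\<in>X. \<Sum>j\<in>J. avg (?Cp j u) (phi l t j)) = (\<Sum>j\<in>J. \<Sum>u\<in>X. avg (?Cp j u) (phi l t j))"
      by (rule sum.swap)
    have sw2: "(\<Sum>u\<in>X. \<Sum>j\<in>J. lam l j * avg (?Cp j u) (F u)) = (\<Sum>j\<in>J. \<Sum>u\<in>X. lam l j * avg (?Cp j u) (F u))"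
      by (rule sum.swap)
    have r: "(\<Sum>u\<in>X. Rz l t) = card X * Rz l t" by simp
    show ?thesis using H sw1 sw2 r by linarith
  qed
  have neT: "Typ l t \<noteq> {}" using ne unfolding X_def .
  have A: "(\<Sum>u\<in>X. phi l t l u) \<ge> card X * (avg (C l t l) (phi l t l) - 2 * \<beta> * (Bd * n * N l))"
    unfolding X_def by (rule step_A[OF l inv neT])
  have C1: "(\<Sum>j\<in>J. \<Sum>u\<in>X. avg (?Cp j u) (phi l t j))
      \<ge> (\<Sum>j\<in>J. card X * (avg (C l t j) (phi l t j) - (2 * \<gamma> / \<tau> + \<beta>) * (Bd * n * N j)))"
    unfolding X_def J_def by (intro sum_mono step_C1[OF l inv neT]) auto
  have C2: "(\<Sum>j\<in>J. \<Sum>u\<in>X. lam l j * avg (?Cp j u) (F u))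
      \<ge> (\<Sum>j\<in>J. card X * (kap l j * avg2 (C l t l) (C l t j) F - N l * N j * Bd * (2 * \<gamma> / \<tau> + 2 * \<beta>)))"
    unfolding X_def J_def by (intro sum_mono step_C2[OF l inv neT]) auto
  have D: "(\<Sum>i\<in>J. \<Sum>j\<in>{i<..<k}. \<Sum>u\<in>X. kap i j * avg2 (?Cp i u) (?Cp j u) F)
      \<ge> (\<Sum>i\<in>J. \<Sum>j\<in>{i<..<k}. card X * (kap i j * avg2 (C l t i) (C l t j) F - N i * N j * Bd * (4 * \<gamma> / \<tau> + \<beta>)))"
    unfolding X_def J_def by (intro sum_mono step_D[OF l inv neT]) auto
  define Err where "Err = 2 * \<beta> * (Bd * n * N l) + (\<Sum>j\<in>{l<..<k}. (2 * \<gamma> / \<tau> + \<beta>) * (Bd * n * N j))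
     + (\<Sum>j\<in>{l<..<k}. N l * N j * Bd * (2 * \<gamma> / \<tau> + 2 * \<beta>))
     + (\<Sum>i\<in>{l<..<k}. \<Sum>j\<in>{i<..<k}. N i * N j * Bd * (4 * \<gamma> / \<tau> + \<beta>))"
  have EB: "Err \<le> Bd * n^2 * (8 * \<gamma> / \<tau> + 6 * \<beta>)" unfolding Err_def by (rule Err_bound[OF l])
  have E: "card X * Rz l t + card X * (avg (C l t l) (phi l t l) - 2 * \<beta> * (Bd * n * N l))
     + (\<Sum>j\<in>J. card X * (avg (C l t j) (phi l t j) - (2 * \<gamma> / \<tau> + \<beta>) * (Bd * n * N j)))
     + (\<Sum>j\<in>J. card X * (kap l j * avg2 (C l t l) (C l t j) F - N l * N j * Bd * (2 * \<gamma> / \<tau> + 2 * \<beta>)))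
     + (\<Sum>i\<in>J. \<Sum>j\<in>{i<..<k}. card X * (kap i j * avg2 (C l t i) (C l t j) F - N i * N j * Bd * (4 * \<gamma> / \<tau> + \<beta>)))
     = card X * (T l t - Err)"
    unfolding T_split[OF l] Err_def J_def
    apply (subst sum_cmult_diff2)
    apply (subst sum_cmult_diff)+
    apply (rule lin_aux)
    done
  have "(\<Sum>u\<in>X. T (Suc l) (t(l := u))) \<ge> card X * (T l t - Err)"
    using S A C1 C2 D E by linarith
  moreover have "card X * (T l t - Err) \<ge> card X * (T l t - Bd * n^2 * (8 * \<gamma> / \<tau> + 6 * \<beta>))"
    using EB by (intro mult_left_mono) auto
  ultimately have "(\<Sum>u\<in>X. T (Suc l) (t(l := u))) \<ge> card X * (T l t - Bd * n^2 * (8 * \<gamma> / \<tau> + 6 * \<beta>))"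
    by linarith
  then obtain u where u: "u \<in> X" "T (Suc l) (t(l := u)) \<ge> T l t - Bd * n^2 * (8 * \<gamma> / \<tau> + 6 * \<beta>)"
    using exists_ge_avg[OF fX ne] by blast
  then show ?thesis using Inv_Suc[OF l inv] unfolding X_def by blast
qed

end

context emb begin

lemma T0_indep: "T 0 t = T 0 t'"
  unfolding T_def Rz_def U_def Pr_def phi_def C_0 by simp

lemma Inv0: "Inv 0 t"
  unfolding Inv_def C_0 N_def by simp

lemma iterate: "l \<le> k \<Longrightarrow> \<exists>t. Inv l t \<and> T l t \<ge> T 0 t0 - l * (Bd * n^2 * (8 * \<gamma> / \<tau> + 6 * \<beta>))"
proof (induction l)
  case 0 then show ?case using Inv0 T0_indep by auto
next
  case (Suc l)
  then obtain t where t: "Inv l t" "T l t \<ge> T 0 t0 - l * (Bd * n^2 * (8 * \<gamma> / \<tau> + 6 * \<beta>))" by auto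
  obtain u where u: "Inv (Suc l) (t(l := u))" "T (Suc l) (t(l := u)) \<ge> T l t - Bd * n^2 * (8 * \<gamma> / \<tau> + 6 * \<beta>)"
    using step[OF _ t(1)] Suc.prems by auto
  define t' where "t' = t(l := u)"
  have u': "Inv (Suc l) t'" "T (Suc l) t' \<ge> T l t - Bd * n^2 * (8 * \<gamma> / \<tau> + 6 * \<beta>)"
    using u unfolding t'_def by auto
  have e: "real (Suc l) * (Bd * n^2 * (8 * \<gamma> / \<tau> + 6 * \<beta>)) = l * (Bd * n^2 * (8 * \<gamma> / \<tau> + 6 * \<beta>)) + Bd * n^2 * (8 * \<gamma> / \<tau> + 6 * \<beta>)"
    by (simp add: distrib_right)
  show ?case using t u' e by (intro exI[of _ t']) linarith
qed

lemma Tk: "T k t = (\<Sum>j<k. \<Sum>i<j. lam i j * F (t i) (t j))"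
  unfolding T_def U_def Pr_def Rz_def phi_def by simp

lemma T0_val: "T 0 t = (\<Sum>i<k. \<Sum>j\<in>{i<..<k}. if Hr i j then (\<Sum>u\<in>P i. \<Sum>v\<in>P j. F u v) else 0)"
proof -
  have a: "avg (P j) (phi 0 t j) = 0" for j unfolding phi_def avg_def by simp
  have b: "kap i j * avg2 (P i) (P j) F = (if Hr i j then (\<Sum>u\<in>P i. \<Sum>v\<in>P j. F u v) else 0)" for i j
  proof (cases "Hr i j")
    case True
    have "N i > 0" "N j > 0" using Hne[OF True] Hne[of j i] True Hsym[of i j] unfolding N_def by auto
    then show ?thesis using True unfolding kap_def avg2_def N_def by simp
  next
    case False then show ?thesis unfolding kap_def by simp
  qed
  show ?thesis unfolding T_def Rz_def U_def Pr_def C_0 a b by (simp add: atLeast0LessThan)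
qed

theorem embed:
  "\<exists>t. (\<Sum>j<k. \<Sum>i<j. lam i j * F (t i) (t j))
     \<ge> (\<Sum>i<k. \<Sum>j\<in>{i<..<k}. if Hr i j then (\<Sum>u\<in>P i. \<Sum>v\<in>P j. F u v) else 0)
        - k * (Bd * n^2 * (8 * \<gamma> / \<tau> + 6 * \<beta>))"
  using iterate[OF order_refl, of undefined] unfolding Tk T0_val by blast

end

lemma sum_square_split:
  fixes f :: "nat \<Rightarrow> nat \<Rightarrow> real"
  shows "(\<Sum>i<k. \<Sum>j<k. f i j) = (\<Sum>i<k. f i i) + (\<Sum>j<k. \<Sum>i<j. f i j + f j i)"
proof (induction k)
  case 0 then show ?case by simp
next
  case (Suc k)
  have "(\<Sum>i<Suc k. \<Sum>j<Suc k. f i j) = (\<Sum>i<k. \<Sum>j<k. f i j) + (\<Sum>i<k. f i k) + (\<Sum>j<k. f k j) + f k k"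
    by (simp add: sum.distrib)
  also have "\<dots> = (\<Sum>i<Suc k. f i i) + (\<Sum>j<Suc k. \<Sum>i<j. f i j + f j i)"
    using Suc by (simp add: sum.distrib)
  finally show ?case .
qed

lemma sum_tri_swap:
  fixes f :: "nat \<Rightarrow> nat \<Rightarrow> real"
  shows "(\<Sum>i<k. \<Sum>j\<in>{i<..<k}. f i j) = (\<Sum>j<k. \<Sum>i<j. f i j)"
proof (induction k)
  case 0 then show ?case by simp
next
  case (Suc k)
  have e: "{i<..<Suc k} = insert k {i<..<k}" if "i < k" for i using that by auto
  have z: "{k<..<Suc k} = {}" by auto
  have "(\<Sum>i<Suc k. \<Sum>j\<in>{i<..<Suc k}. f i j) = (\<Sum>i<k. \<Sum>j\<in>{i<..<Suc k}. f i j)"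
    by (simp add: z)
  also have "\<dots> = (\<Sum>i<k. f i k + (\<Sum>j\<in>{i<..<k}. f i j))"
    by (intro sum.cong refl) (simp add: e)
  also have "\<dots> = (\<Sum>j<Suc k. \<Sum>i<j. f i j)" using Suc by (simp add: sum.distrib)
  finally show ?case .
qed

lemma card_split_sets:
  assumes K: "finite K" and i: "i \<in> K" and j: "j \<in> K" and ij: "i \<noteq> j"
  shows "card {S\<in>Pow K. i \<in> S \<and> j \<notin> S} = 2 ^ (card K - 2)"
proof -
  have "bij_betw (\<lambda>S. S - {i}) {S\<in>Pow K. i \<in> S \<and> j \<notin> S} (Pow (K - {i, j}))"
  proof (rule bij_betw_byWitness[where f' = "\<lambda>S. insert i S"])
    show "\<forall>a\<in>{S \<in> Pow K. i \<in> S \<and> j \<notin> S}. insert i (a - {i}) = a" by auto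
    show "\<forall>a'\<in>Pow (K - {i, j}). insert i a' - {i} = a'" by auto
    show "(\<lambda>S. S - {i}) ` {S \<in> Pow K. i \<in> S \<and> j \<notin> S} \<subseteq> Pow (K - {i, j})" by auto
    show "insert i ` Pow (K - {i, j}) \<subseteq> {S \<in> Pow K. i \<in> S \<and> j \<notin> S}" using i ij by auto
  qed
  then have "card {S\<in>Pow K. i \<in> S \<and> j \<notin> S} = card (Pow (K - {i, j}))" by (rule bij_betw_same_card)
  also have "\<dots> = 2 ^ card (K - {i, j})" using K by (simp add: card_Pow)
  also have "card (K - {i, j}) = card K - 2" using K i j ij by (simp add: card_Diff_subset)
  finally show ?thesis .
qed

lemma cut_avg:
  fixes f :: "nat \<Rightarrow> nat \<Rightarrow> real"
  assumes k: "k \<ge> 2"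
  shows "\<exists>S\<subseteq>{..<k}. (\<Sum>i\<in>S. \<Sum>j\<in>{..<k} - S. f i j) \<ge> (1/4) * (\<Sum>i<k. \<Sum>j\<in>{..<k} - {i}. f i j)"
proof -
  let ?K = "{..<k::nat}"
  have fP: "finite (Pow ?K)" by simp
  have "(\<Sum>S\<in>Pow ?K. \<Sum>i\<in>S. \<Sum>j\<in>?K - S. f i j) = (\<Sum>S\<in>Pow ?K. \<Sum>i\<in>?K. \<Sum>j\<in>?K. if i \<in> S \<and> j \<notin> S then f i j else 0)"
  proof (rule sum.cong[OF refl])
    fix S assume S: "S \<in> Pow ?K"
    have "(\<Sum>i\<in>?K. \<Sum>j\<in>?K. if i \<in> S \<and> j \<notin> S then f i j else 0) = (\<Sum>i\<in>?K. if i \<in> S then (\<Sum>j\<in>?K - S. f i j) else 0)"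
    proof (rule sum.cong[OF refl])
      fix i assume "i \<in> ?K"
      show "(\<Sum>j\<in>?K. if i \<in> S \<and> j \<notin> S then f i j else 0) = (if i \<in> S then (\<Sum>j\<in>?K - S. f i j) else 0)"
        by (auto simp: sum.If_cases Diff_eq Compl_eq)
    qed
    also have "\<dots> = (\<Sum>i\<in>S. \<Sum>j\<in>?K - S. f i j)" using S by (simp add: sum.If_cases Int_absorb1)
    finally show "(\<Sum>i\<in>S. \<Sum>j\<in>?K - S. f i j) = (\<Sum>i\<in>?K. \<Sum>j\<in>?K. if i \<in> S \<and> j \<notin> S then f i j else 0)" by simp
  qed
  also have "\<dots> = (\<Sum>i\<in>?K. \<Sum>j\<in>?K. \<Sum>S\<in>Pow ?K. if i \<in> S \<and> j \<notin> S then f i j else 0)"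
    by (simp add: sum.swap[of _ "Pow ?K"])
  also have "\<dots> = (\<Sum>i\<in>?K. \<Sum>j\<in>?K - {i}. 2 ^ (k - 2) * f i j)"
  proof (rule sum.cong[OF refl])
    fix i assume i: "i \<in> ?K"
    have "(\<Sum>j\<in>?K. \<Sum>S\<in>Pow ?K. if i \<in> S \<and> j \<notin> S then f i j else 0) = (\<Sum>j\<in>?K. if j = i then 0 else 2 ^ (k - 2) * f i j)"
    proof (rule sum.cong[OF refl])
      fix j assume j: "j \<in> ?K"
      show "(\<Sum>S\<in>Pow ?K. if i \<in> S \<and> j \<notin> S then f i j else 0) = (if j = i then 0 else 2 ^ (k - 2) * f i j)"
      proof (cases "j = i")
        case True then show ?thesis by simp
      next
        case False
        have "(\<Sum>S\<in>Pow ?K. if i \<in> S \<and> j \<notin> S then f i j else 0) = card {S\<in>Pow ?K. i \<in> S \<and> j \<notin> S} * f i j"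
          using fP by (simp add: sum.If_cases Int_def conj_commute)
        also have "card {S\<in>Pow ?K. i \<in> S \<and> j \<notin> S} = 2 ^ (card ?K - 2)"
          by (rule card_split_sets) (use i j False in auto)
        finally show ?thesis using False by simp
      qed
    qed
    also have "\<dots> = (\<Sum>j\<in>?K - {i}. 2 ^ (k - 2) * f i j)"
      by (simp add: sum.If_cases Diff_eq Int_def conj_commute)
    finally show "(\<Sum>j\<in>?K. \<Sum>S\<in>Pow ?K. if i \<in> S \<and> j \<notin> S then f i j else 0) = (\<Sum>j\<in>?K - {i}. 2 ^ (k - 2) * f i j)" .
  qed
  also have "\<dots> = 2 ^ (k - 2) * (\<Sum>i<k. \<Sum>j\<in>?K - {i}. f i j)" by (simp add: sum_distrib_left)
  finally have tot: "(\<Sum>S\<in>Pow ?K. \<Sum>i\<in>S. \<Sum>j\<in>?K - S. f i j) = 2 ^ (k - 2) * (\<Sum>i<k. \<Sum>j\<in>?K - {i}. f i j)" .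
  have cP: "real (card (Pow ?K)) = 4 * 2 ^ (k - 2)"
  proof -
    obtain d where d: "k = d + 2" using k by (metis le_add_diff_inverse2)
    have "card (Pow ?K) = 2 ^ k" by (simp add: card_Pow)
    also have "(2::nat) ^ k = 4 * 2 ^ (k - 2)" unfolding d by (simp add: power_add)
    finally show ?thesis by simp
  qed
  have "(\<Sum>S\<in>Pow ?K. \<Sum>i\<in>S. \<Sum>j\<in>?K - S. f i j) \<ge> card (Pow ?K) * ((1/4) * (\<Sum>i<k. \<Sum>j\<in>?K - {i}. f i j))"
    unfolding tot cP by simp
  then obtain S where "S \<in> Pow ?K" "(\<Sum>i\<in>S. \<Sum>j\<in>?K - S. f i j) \<ge> (1/4) * (\<Sum>i<k. \<Sum>j\<in>?K - {i}. f i j)"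
    using exists_ge_avg[OF fP] by blast
  then show ?thesis by blast
qed

lemma wset_cnt: "wset E A B = cnt E A B"
  unfolding wset_def cnt_def gw_def by simp

lemma wset_sym: "(\<And>u v. E u v \<Longrightarrow> E v u) \<Longrightarrow> wset E A B = wset E B A"
  unfolding wset_def gw_def by (subst sum.swap) (intro sum.cong refl, metis)

lemma wset_nonneg: "wset E A B \<ge> 0"
  unfolding wset_cnt by (rule cnt_nonneg)

lemma wset_le: "finite A \<Longrightarrow> finite B \<Longrightarrow> wset E A B \<le> real (card A) * real (card B)"
  unfolding wset_cnt by (rule cnt_le)

lemma wset_diag:
  assumes A: "finite A" and irr: "\<And>u. \<not> E u u"
  shows "wset E A A \<le> real (card A) * (real (card A) - 1)"
proof -
  have "wset E A A = (\<Sum>u\<in>A. real (card {v\<in>A. E u v}))"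
    unfolding wset_cnt cnt_rows[of E A A] using A by (simp add: cnt_single)
  also have "\<dots> \<le> (\<Sum>u\<in>A. real (card A) - 1)"
  proof (intro sum_mono)
    fix u assume u: "u \<in> A"
    have "{v\<in>A. E u v} \<subseteq> A - {u}" using irr by auto
    then have "card {v\<in>A. E u v} \<le> card (A - {u})" using A by (intro card_mono) auto
    also have "card (A - {u}) = card A - 1" using u A by simp
    finally have "card {v\<in>A. E u v} \<le> card A - 1" .
    moreover have "card A \<ge> 1" using u A by (simp add: Suc_le_eq card_gt_0_iff) blast
    ultimately show "real (card {v\<in>A. E u v}) \<le> real (card A) - 1" by linarith
  qed
  also have "\<dots> = real (card A) * (real (card A) - 1)" by simp
  finally show ?thesis .
qed

lemma wset_card_pairs:
  assumes "finite A" "finite B"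
  shows "wset E A B = real (card {p\<in>A \<times> B. E (fst p) (snd p)})"
proof -
  have "wset E A B = (\<Sum>p\<in>A \<times> B. if E (fst p) (snd p) then 1 else 0)"
    unfolding wset_def gw_def using assms by (simp add: sum.cartesian_product split_def)
  also have "\<dots> = real (card {p\<in>A \<times> B. E (fst p) (snd p)})"
    using assms by (simp add: sum.If_cases Int_def conj_commute)
  finally show ?thesis .
qed

lemma num_edges_le:
  assumes V: "finite V"
  shows "real (num_edges V E) \<le> wset E V V"
proof -
  have eq: "{{u, v} | u v. u \<in> V \<and> v \<in> V \<and> E u v} = (\<lambda>p. {fst p, snd p}) ` {p\<in>V \<times> V. E (fst p) (snd p)}"
    by (auto simp: image_iff; metis fst_conv snd_conv)
  have "num_edges V E \<le> card {p\<in>V \<times> V. E (fst p) (snd p)}"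
    unfolding num_edges_def eq by (rule card_image_le) (use V in simp)
  then show ?thesis using wset_card_pairs[OF V V, of E] by simp
qed

lemma partition_sum:
  assumes rp: "regular_partition V E k \<epsilon> P" and V: "finite V"
  shows "(\<Sum>u\<in>V. f u) = (\<Sum>i<k. \<Sum>u\<in>P i. f u)"
proof -
  have sub: "\<forall>i<k. P i \<subseteq> V" and un: "(\<Union>i<k. P i) = V"
    and dj: "\<forall>i<k. \<forall>j<k. i \<noteq> j \<longrightarrow> P i \<inter> P j = {}"
    using rp unfolding regular_partition_def by auto
  have "(\<Sum>u\<in>V. f u) = (\<Sum>u\<in>(\<Union>i<k. P i). f u)" using un by simp
  also have "\<dots> = (\<Sum>i<k. \<Sum>u\<in>P i. f u)"
    by (rule sum.UNION_disjoint) (use sub V dj in \<open>auto intro: finite_subset\<close>)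
  finally show ?thesis .
qed

lemma part_size:
  assumes rp: "regular_partition V E k \<epsilon> P" and i: "i < k" and k: "k > 0"
  shows "real (card (P i)) \<le> real (card V) / real k + 1"
proof -
  have "int (card (P i)) = \<lfloor>real (card V) / real k\<rfloor> \<or> int (card (P i)) = \<lceil>real (card V) / real k\<rceil>"
    using rp i unfolding regular_partition_def by auto
  then have "int (card (P i)) \<le> \<lceil>real (card V) / real k\<rceil>"
    using floor_le_ceiling[of "real (card V) / real k"] by linarith
  then have "real (card (P i)) \<le> real_of_int \<lceil>real (card V) / real k\<rceil>"
    by (metis of_int_le_iff of_int_of_nat_eq)
  also have "\<dots> \<le> real (card V) / real k + 1" by linarith
  finally show ?thesis .
qed

lemma diag_total:
  assumes rp: "regular_partition V E k \<epsilon> P" and V: "finite V" and k: "k > 0" and irr: "\<And>u. \<not> E u u"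
  shows "(\<Sum>i<k. wset E (P i) (P i)) \<le> real (card V) ^ 2 / real k"
proof -
  have sub: "\<forall>i<k. P i \<subseteq> V" using rp unfolding regular_partition_def by auto
  have "(\<Sum>i<k. wset E (P i) (P i)) \<le> (\<Sum>i<k. real (card (P i)) * (real (card V) / real k))"
  proof (intro sum_mono)
    fix i assume i: "i \<in> {..<k}"
    have f: "finite (P i)" using sub i V finite_subset by blast
    have "wset E (P i) (P i) \<le> real (card (P i)) * (real (card (P i)) - 1)" by (rule wset_diag[OF f irr])
    also have "\<dots> \<le> real (card (P i)) * (real (card V) / real k)"
      using part_size[OF rp _ k, of i] i by (intro mult_left_mono) auto
    finally show "wset E (P i) (P i) \<le> real (card (P i)) * (real (card V) / real k)" .
  qed
  also have "\<dots> = (\<Sum>i<k. real (card (P i))) * (real (card V) / real k)" by (rule sum_distrib_right[symmetric])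
  also have "(\<Sum>i<k. real (card (P i))) = real (card V)"
    using partition_sum[OF rp V, of "\<lambda>_. 1::real"] by simp
  finally show ?thesis by (simp add: power2_eq_square)
qed

lemma nat_big:
  fixes k :: nat assumes k: "k \<ge> 20"
  shows "1572864 * k^7 * (8*k)^(2*k) \<le> k^(8*k^2)"
proof -
  have a: "(1572864::nat) \<le> k^5"
  proof -
    have "(20::nat)^5 \<le> k^5" using k by (intro power_mono) auto
    then show ?thesis by simp
  qed
  have b: "(8*k)^(2*k) \<le> (k^2)^(2*k)"
    using k by (intro power_mono) (auto simp: power2_eq_square)
  have "1572864 * k^7 * (8*k)^(2*k) \<le> k^5 * k^7 * (k^2)^(2*k)"
    using a b by (intro mult_mono) auto
  also have "\<dots> = k^(12 + 4*k)" by (simp add: power_add power_mult[symmetric] mult.commute)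
  also have "\<dots> \<le> k^(8*k^2)"
  proof (rule power_increasing)
    have "20 * k \<le> k * k" using k by (intro mult_right_mono) auto
    then show "12 + 4 * k \<le> 8 * k^2" unfolding power2_eq_square using k by linarith
  qed (use k in auto)
  finally show ?thesis .
qed

lemma params:
  fixes k :: nat and \<epsilon>' :: real
  assumes k: "k \<ge> 20" and e0: "0 \<le> \<epsilon>'" and e1: "\<epsilon>' \<le> (1 / real k) ^ (8 * k^2)"
  shows "2 * (1 / (512 * real k^3)) \<le> 1 / (4 * real k)"
    and "4 * k * \<epsilon>' / ((1 / (512 * real k^3)) * (1 / (4 * real k) - 1 / (512 * real k^3)) * ((1 / (4 * real k) - 1 / (512 * real k^3)) ^ k)^2)
         \<le> 1 / (96 * real k^2)"
proof -
  have kp: "real k \<ge> 20" using k by simp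
  have kpos: "real k > 0" using kp by simp
  show "2 * (1 / (512 * real k^3)) \<le> 1 / (4 * real k)"
  proof -
    have "real k ^ 1 \<le> real k^3" using kp by (intro power_increasing) auto
    then have "real k \<le> real k^3" by simp
    then have "8 * real k \<le> 512 * real k^3" by linarith
    then show ?thesis using kpos by (simp add: field_simps)
  qed
  define \<gamma> where "\<gamma> = 1 / (512 * real k^3)"
  define \<tau> where "\<tau> = 1 / (4 * real k)"
  have tg: "\<tau> - \<gamma> \<ge> 1 / (8 * real k)"
  proof -
    have "real k ^ 1 \<le> real k^3" using kp by (intro power_increasing) auto
    then have "real k \<le> real k^3" by simp
    then have "8 * real k \<le> 512 * real k^3" by linarith
    then have "1 / (512 * real k^3) \<le> 1 / (8 * real k)" using kpos by (intro divide_left_mono) auto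
    moreover have "1 / (4 * real k) = 2 / (8 * real k)" by simp
    ultimately show ?thesis unfolding \<tau>_def \<gamma>_def by simp
  qed
  have p8: "1 / (8 * real k) > 0" using kpos by simp
  have al: "((\<tau> - \<gamma>) ^ k)^2 \<ge> (1 / (8 * real k)) ^ (2*k)"
  proof -
    have "(1 / (8 * real k)) ^ (2*k) = ((1 / (8 * real k)) ^ k)^2" by (simp add: power_mult[symmetric] mult.commute)
    also have "\<dots> \<le> ((\<tau> - \<gamma>) ^ k)^2" using tg p8 by (intro power_mono) auto
    finally show ?thesis .
  qed
  have low: "\<gamma> * (\<tau> - \<gamma>) * ((\<tau> - \<gamma>) ^ k)^2 \<ge> \<gamma> * (1 / (8 * real k)) * (1 / (8 * real k)) ^ (2*k)"
  proof -
    have gp: "\<gamma> > 0" unfolding \<gamma>_def using kpos by simp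
    have tp: "\<tau> - \<gamma> > 0" using tg p8 by linarith
    show ?thesis using tg al p8 gp tp by (intro mult_mono) auto
  qed
  have lowpos: "\<gamma> * (1 / (8 * real k)) * (1 / (8 * real k)) ^ (2*k) > 0" unfolding \<gamma>_def using kpos by simp
  have "4 * k * \<epsilon>' / (\<gamma> * (\<tau> - \<gamma>) * ((\<tau> - \<gamma>) ^ k)^2) \<le> 4 * k * \<epsilon>' / (\<gamma> * (1 / (8 * real k)) * (1 / (8 * real k)) ^ (2*k))"
  proof -
    have pp: "\<gamma> * (\<tau> - \<gamma>) * ((\<tau> - \<gamma>) ^ k)^2 > 0" using low lowpos by linarith
    show ?thesis using divide_left_mono[OF low _ mult_pos_pos[OF pp lowpos], of "4 * k * \<epsilon>'"] e0 by simp
  qed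
  also have "\<dots> = 16384 * real k^5 * (8 * real k)^(2*k) * \<epsilon>'"
  proof -
    have p5: "real k ^ 5 = real k * (real k * (real k * (real k * real k)))" by (simp add: numeral_eq_Suc)
    show ?thesis unfolding \<gamma>_def using kpos by (simp add: field_simps power_divide power2_eq_square power3_eq_cube p5)
  qed
  also have "\<dots> \<le> 1 / (96 * real k^2)"
  proof -
    have "real (1572864 * k^7 * (8*k)^(2*k)) \<le> real (k^(8*k^2))" using nat_big[OF k] by (simp only: of_nat_le_iff)
    then have A: "1572864 * real k^7 * (8 * real k)^(2*k) \<le> real k^(8*k^2)" by simp
    have B: "\<epsilon>' * real k^(8*k^2) \<le> 1"
    proof -
      have "\<epsilon>' * real k^(8*k^2) \<le> (1 / real k) ^ (8 * k^2) * real k^(8*k^2)"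
        using e1 by (intro mult_right_mono) auto
      also have "\<dots> = 1" using kpos by (simp add: power_one_over[symmetric] power_mult_distrib[symmetric])
      finally show ?thesis .
    qed
    have "1572864 * real k^7 * (8 * real k)^(2*k) * \<epsilon>' \<le> 1"
      using mult_right_mono[OF A e0] B by (simp add: mult.commute)
    moreover have "real k ^ 7 = real k * (real k * real k ^ 5)" by (simp add: numeral_eq_Suc)
    ultimately show ?thesis using kpos by (simp add: field_simps power2_eq_square)
  qed
  finally show "4 * k * \<epsilon>' / ((1 / (512 * real k^3)) * (1 / (4 * real k) - 1 / (512 * real k^3)) * ((1 / (4 * real k) - 1 / (512 * real k^3)) ^ k)^2)
         \<le> 1 / (96 * real k^2)" unfolding \<gamma>_def \<tau>_def .
qed

lemma opt_ge:
  assumes "finite A" "finite B" "h \<in> A \<rightarrow>\<^sub>E B"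
  shows "(\<Sum>u\<in>A. \<Sum>v\<in>A. wA u v * wB (h u) (h v)) \<le> opt A wA B wB"
  unfolding opt_def by (rule Max_ge) (use assms in \<open>auto simp: finite_PiE\<close>)

lemma opt_attained:
  assumes "finite A" "finite B" "B \<noteq> {}"
  shows "\<exists>h\<in>A \<rightarrow>\<^sub>E B. opt A wA B wB = (\<Sum>u\<in>A. \<Sum>v\<in>A. wA u v * wB (h u) (h v))"
proof -
  have ne: "A \<rightarrow>\<^sub>E B \<noteq> {}" using assms by (simp add: PiE_eq_empty_iff)
  have "opt A wA B wB \<in> (\<lambda>h. \<Sum>u\<in>A. \<Sum>v\<in>A. wA u v * wB (h u) (h v)) ` (A \<rightarrow>\<^sub>E B)"
    unfolding opt_def by (rule Max_in) (use assms ne in \<open>auto simp: finite_PiE\<close>)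
  then show ?thesis by auto
qed

lemma opt_nonneg:
  assumes "finite A" "finite B" "B \<noteq> {}" "\<And>u v. wA u v \<ge> 0" "\<And>a b. wB a b \<ge> 0"
  shows "opt A wA B wB \<ge> 0"
proof -
  obtain h where "h \<in> A \<rightarrow>\<^sub>E B" "opt A wA B wB = (\<Sum>u\<in>A. \<Sum>v\<in>A. wA u v * wB (h u) (h v))"
    using opt_attained[OF assms(1-3)] by blast
  then show ?thesis using assms by (auto intro!: sum_nonneg mult_nonneg_nonneg)
qed

lemma part_unique:
  assumes rp: "regular_partition V E k \<epsilon> P" and u: "u \<in> P i" "i < k"
  shows "(SOME i. i < k \<and> u \<in> P i) = i"
proof -
  have dj: "\<forall>i<k. \<forall>j<k. i \<noteq> j \<longrightarrow> P i \<inter> P j = {}" using rp unfolding regular_partition_def by auto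
  show ?thesis by (rule some_equality) (use u dj in auto)
qed

lemma quot_le_orig:
  assumes rp: "regular_partition V E k \<epsilon> P" and V: "finite V" and g: "g \<in> {..<k} \<rightarrow>\<^sub>E {..<m}"
  shows "\<exists>h\<in>V \<rightarrow>\<^sub>E {..<m}. (\<Sum>u\<in>V. \<Sum>v\<in>V. gw E u v * W (h u) (h v))
          = (\<Sum>i<k. \<Sum>j<k. quot_weight E P i j * W (g i) (g j))"
proof -
  define pt where "pt u = (SOME i. i < k \<and> u \<in> P i)" for u
  define h where "h = restrict (\<lambda>u. g (pt u)) V"
  have un: "(\<Union>i<k. P i) = V" using rp unfolding regular_partition_def by auto
  have ptP: "pt u = i" if "u \<in> P i" "i < k" for u i unfolding pt_def using part_unique[OF rp that] .
  have hm: "h \<in> V \<rightarrow>\<^sub>E {..<m}"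
  proof -
    have "pt u < k" if "u \<in> V" for u using that un ptP by auto
    then show ?thesis unfolding h_def using g by auto
  qed
  have sub: "P i \<subseteq> V" if "i < k" for i using rp that unfolding regular_partition_def by auto
  have hP: "h u = g i" if "u \<in> P i" "i < k" for u i unfolding h_def using that sub ptP by auto
  have "(\<Sum>u\<in>V. \<Sum>v\<in>V. gw E u v * W (h u) (h v)) = (\<Sum>i<k. \<Sum>u\<in>P i. \<Sum>j<k. \<Sum>v\<in>P j. gw E u v * W (h u) (h v))"
    by (simp add: partition_sum[OF rp V])
  also have "\<dots> = (\<Sum>i<k. \<Sum>u\<in>P i. \<Sum>j<k. \<Sum>v\<in>P j. gw E u v * W (g i) (g j))"
    by (intro sum.cong refl) (simp add: hP)
  also have "\<dots> = (\<Sum>i<k. \<Sum>j<k. \<Sum>u\<in>P i. \<Sum>v\<in>P j. gw E u v * W (g i) (g j))"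
    by (intro sum.cong refl sum.swap)
  also have "\<dots> = (\<Sum>i<k. \<Sum>j<k. quot_weight E P i j * W (g i) (g j))"
    unfolding quot_weight_def wset_def by (simp add: sum_distrib_right)
  finally show ?thesis using hm by blast
qed

lemma cut_lower:
  fixes k m a b :: nat and q W :: "nat \<Rightarrow> nat \<Rightarrow> real"
  assumes k: "k \<ge> 2" and a: "a < m" and b: "b < m" and W: "\<And>a b. W a b \<ge> 0"
    and qn: "\<And>i j. q i j \<ge> (0::real)"
  shows "opt {..<k} q {..<m} W \<ge> W a b / 4 * (\<Sum>i<k. \<Sum>j\<in>{..<k} - {i}. q i j)"
proof -
  obtain S where S: "S \<subseteq> {..<k}" "(\<Sum>i\<in>S. \<Sum>j\<in>{..<k} - S. q i j) \<ge> (1/4) * (\<Sum>i<k. \<Sum>j\<in>{..<k} - {i}. q i j)"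
    using cut_avg[OF k, of q] by blast
  define g where "g = restrict (\<lambda>i. if i \<in> S then a else b) {..<k}"
  have gm: "g \<in> {..<k} \<rightarrow>\<^sub>E {..<m}" unfolding g_def using a b by auto
  have "(\<Sum>i\<in>S. \<Sum>j\<in>{..<k} - S. q i j * W (g i) (g j)) \<le> (\<Sum>i\<in>S. \<Sum>j<k. q i j * W (g i) (g j))"
    using qn W by (intro sum_mono sum_mono2) (auto intro: mult_nonneg_nonneg)
  also have "\<dots> \<le> (\<Sum>i<k. \<Sum>j<k. q i j * W (g i) (g j))"
    using qn W S by (intro sum_mono2 sum_nonneg) (auto intro: mult_nonneg_nonneg)
  also have "\<dots> \<le> opt {..<k} q {..<m} W" by (rule opt_ge[OF _ _ gm]) auto
  finally have A: "(\<Sum>i\<in>S. \<Sum>j\<in>{..<k} - S. q i j * W (g i) (g j)) \<le> opt {..<k} q {..<m} W" .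
  have "(\<Sum>i\<in>S. \<Sum>j\<in>{..<k} - S. q i j * W (g i) (g j)) = W a b * (\<Sum>i\<in>S. \<Sum>j\<in>{..<k} - S. q i j)"
    unfolding sum_distrib_left using S(1) by (intro sum.cong refl) (auto simp: g_def subset_iff mult.commute)
  moreover have "W a b * (\<Sum>i\<in>S. \<Sum>j\<in>{..<k} - S. q i j) \<ge> W a b * ((1/4) * (\<Sum>i<k. \<Sum>j\<in>{..<k} - {i}. q i j))"
    using S(2) W by (intro mult_left_mono) auto
  ultimately show ?thesis using A by simp
qed

lemma upper:
  fixes V :: "'a set" and E :: "'a \<Rightarrow> 'a \<Rightarrow> bool" and k m :: nat and P :: "nat \<Rightarrow> 'a set"
    and \<epsilon> M :: real and W :: "nat \<Rightarrow> nat \<Rightarrow> real" and h :: "'a \<Rightarrow> nat"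
  assumes gr: "is_graph V E" and rp: "regular_partition V E k \<epsilon> P" and k20: "k \<ge> 20"
    and epsb: "\<epsilon> \<le> (1 / real k) ^ (8 * k^2)"
    and m: "m \<ge> 1" and W: "\<And>a b. W a b \<ge> 0" and WM: "\<And>a b. a < m \<Longrightarrow> b < m \<Longrightarrow> W a b \<le> M"
    and h: "h \<in> V \<rightarrow>\<^sub>E {..<m}"
  shows "(\<Sum>u\<in>V. \<Sum>v\<in>V. gw E u v * W (h u) (h v))
     \<le> opt {..<k} (quot_weight E P) {..<m} W + 3/2 * M * real (card V)^2 / real k"
proof -
  have V: "finite V" and Esym: "\<And>u v. E u v \<Longrightarrow> E v u" and irr: "\<And>u. \<not> E u u"
    using gr unfolding is_graph_def by auto
  have sub: "\<And>i. i < k \<Longrightarrow> P i \<subseteq> V" using rp unfolding regular_partition_def by auto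
  have finP: "\<And>i. i < k \<Longrightarrow> finite (P i)" using sub V finite_subset by blast
  have M0: "M \<ge> 0" using W[of 0 0] WM[of 0 0] m by force
  have kpos: "real k > 0" using k20 by simp
  define h' where "h' u = (if u \<in> V then h u else 0)" for u
  define G where "G u v = W (h' u) (h' v)" for u v
  define F where "F u v = gw E u v * (G u v + G v u)" for u v
  define Nn where "Nn i = real (card (P i))" for i
  define \<rho> where "\<rho> i j = wset E (P i) (P j) / (Nn i * Nn j)" for i j
  define \<tau> where "\<tau> = 1 / (4 * real k)"
  define \<gamma> where "\<gamma> = 1 / (512 * real k^3)"
  define \<epsilon>' where "\<epsilon>' = max \<epsilon> 0"
  define \<alpha> where "\<alpha> = (\<tau> - \<gamma>) ^ k"
  define \<beta> where "\<beta> = 4 * k * \<epsilon>' / (\<gamma> * (\<tau> - \<gamma>) * \<alpha>^2)"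
  define Hr where "Hr i j = (i < k \<and> j < k \<and> i \<noteq> j \<and> \<tau> \<le> \<rho> i j)" for i j
  have hm: "h' u < m" for u unfolding h'_def using h m by auto
  have Gb: "0 \<le> G u v \<and> G u v \<le> M" for u v unfolding G_def using W WM hm by auto
  have gw01: "0 \<le> gw E u v \<and> gw E u v \<le> 1" for u v unfolding gw_def by auto
  have Fb: "0 \<le> F u v \<and> F u v \<le> 2 * M" for u v
  proof -
    have "F u v \<le> 1 * (M + M)" unfolding F_def using gw01 Gb by (intro mult_mono add_mono) auto
    then show ?thesis unfolding F_def using gw01 Gb by auto
  qed
  have F0: "\<not> E u v \<Longrightarrow> F u v = 0" for u v unfolding F_def gw_def by simp
  have rho_sym: "\<rho> i j = \<rho> j i" for i j unfolding \<rho>_def using wset_sym[of E, OF Esym] by (simp add: mult.commute)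
  have e0: "0 \<le> \<epsilon>'" unfolding \<epsilon>'_def by simp
  have e1: "\<epsilon>' \<le> (1 / real k) ^ (8 * k^2)" unfolding \<epsilon>'_def using epsb by simp
  have pr1: "2 * \<gamma> \<le> \<tau>" unfolding \<gamma>_def \<tau>_def by (rule params(1)[OF k20 e0 e1])
  have pr2: "\<beta> \<le> 1 / (96 * real k^2)" unfolding \<beta>_def \<alpha>_def \<gamma>_def \<tau>_def by (rule params(2)[OF k20 e0 e1])
  have bh: "\<beta> \<le> 1 / 2"
  proof -
    have k2: "real k ^ 2 \<ge> 1" using k20 by (simp add: one_le_power)
    have k3: "2 \<le> 96 * real k^2" using k2 by linarith
    have "1 / (96 * real k^2) \<le> 1 / 2" using k3 kpos by (intro divide_left_mono) auto
    then show ?thesis using pr2 by linarith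
  qed
  have gpos: "\<gamma> > 0" unfolding \<gamma>_def using kpos by simp
  have tau1: "\<tau> \<le> 1" unfolding \<tau>_def using kpos k20 by simp
  interpret Em: emb k P E Hr \<rho> F "2 * M" \<epsilon>' \<gamma> \<tau> \<alpha> \<beta>
  proof
    show "\<And>i. i < k \<Longrightarrow> finite (P i)" by (rule finP)
    show "\<And>i j. Hr i j = Hr j i" unfolding Hr_def using rho_sym by auto
    show "\<And>i j. Hr i j \<Longrightarrow> i < k \<and> j < k \<and> i \<noteq> j" unfolding Hr_def by auto
    show "\<And>i j. Hr i j \<Longrightarrow> \<tau> \<le> \<rho> i j \<and> \<rho> i j \<le> 1"
    proof -
      fix i j assume H: "Hr i j"
      have "\<rho> i j \<le> 1"
      proof (cases "Nn i * Nn j = 0")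
        case True then show ?thesis unfolding \<rho>_def by (simp only: div_by_0)
      next
        case False
        then have "Nn i * Nn j > 0" unfolding Nn_def by (simp add: zero_less_mult_iff)
        moreover have "wset E (P i) (P j) \<le> Nn i * Nn j" unfolding Nn_def using finP H unfolding Hr_def by (intro wset_le) auto
        ultimately show ?thesis unfolding \<rho>_def by simp
      qed
      then show "\<tau> \<le> \<rho> i j \<and> \<rho> i j \<le> 1" using H unfolding Hr_def by auto
    qed
    show "\<And>i j. Hr i j \<Longrightarrow> card (P i) > 0"
    proof (rule ccontr)
      fix i j assume H: "Hr i j" and "\<not> card (P i) > 0"
      then have "\<rho> i j = 0" unfolding \<rho>_def Nn_def by simp
      moreover have "\<tau> > 0" unfolding \<tau>_def using kpos by simp
      ultimately show False using H unfolding Hr_def by simp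
    qed
    show "\<And>i j A B. Hr i j \<Longrightarrow> A \<subseteq> P i \<Longrightarrow> B \<subseteq> P j \<Longrightarrow>
               \<bar>cnt E A B - \<rho> i j * card A * card B\<bar> \<le> \<epsilon>' * card (P i) * card (P j)"
    proof -
      fix i j A B assume H: "Hr i j" and A: "A \<subseteq> P i" and B: "B \<subseteq> P j"
      have "homogeneous E (P i) (P j) \<epsilon>" using rp H unfolding regular_partition_def Hr_def by auto
      then have "\<bar>wset E A B - \<rho> i j * card A * card B\<bar> \<le> \<epsilon> * card (P i) * card (P j)"
        unfolding homogeneous_def \<rho>_def Nn_def Let_def using A B by blast
      also have "\<dots> \<le> \<epsilon>' * card (P i) * card (P j)" unfolding \<epsilon>'_def by (intro mult_right_mono) auto
      finally show "\<bar>cnt E A B - \<rho> i j * card A * card B\<bar> \<le> \<epsilon>' * card (P i) * card (P j)" by (simp add: wset_cnt)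
    qed
    show "\<And>u v. 0 \<le> F u v \<and> F u v \<le> 2 * M" by (rule Fb)
    show "\<And>u v. \<not> E u v \<Longrightarrow> F u v = 0" by (rule F0)
    show "0 < \<gamma>" by (rule gpos)
    show "2 * \<gamma> \<le> \<tau>" by (rule pr1)
    show "\<tau> \<le> 1" by (rule tau1)
    show "0 \<le> \<epsilon>'" by (rule e0)
    show "\<alpha> = (\<tau> - \<gamma>) ^ k" by (rule \<alpha>_def)
    show "\<beta> = 4 * k * \<epsilon>' / (\<gamma> * (\<tau> - \<gamma>) * \<alpha>^2)" by (rule \<beta>_def)
    show "\<beta> \<le> 1 / 2" by (rule bh)
  qed
  have Nsum: "Em.n = real (card V)"
    unfolding Em.n_def Em.N_def using partition_sum[OF rp V, of "\<lambda>_. 1::real"] by simp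
  obtain t where t: "(\<Sum>j<k. \<Sum>i<j. Em.lam i j * F (t i) (t j))
     \<ge> (\<Sum>i<k. \<Sum>j\<in>{i<..<k}. if Hr i j then (\<Sum>u\<in>P i. \<Sum>v\<in>P j. F u v) else 0)
        - k * (2 * M * Em.n^2 * (8 * \<gamma> / \<tau> + 6 * \<beta>))"
    using Em.embed by blast
  define g where "g = restrict (\<lambda>i. h' (t i)) {..<k}"
  have gm: "g \<in> {..<k} \<rightarrow>\<^sub>E {..<m}" unfolding g_def using hm by auto
  define qw where "qw = quot_weight E P"
  have qsym: "qw i j = qw j i" for i j unfolding qw_def quot_weight_def using wset_sym[of E, OF Esym] by simp
  have qn: "qw i j \<ge> 0" for i j unfolding qw_def quot_weight_def by (rule wset_nonneg)
  have lam_le: "Em.lam i j \<le> qw i j" "Em.lam i j \<ge> 0" for i j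
  proof -
    show "Em.lam i j \<ge> 0" by (rule Em.lam_nonneg)
    show "Em.lam i j \<le> qw i j"
    proof (cases "Hr i j")
      case True
      have "Nn i > 0" "Nn j > 0" using Em.Hne[OF True] Em.Hne[of j i] True Em.Hsym[of i j] unfolding Nn_def by auto
      then have "Em.lam i j = wset E (P i) (P j)"
        using True unfolding Em.lam_def Em.kap_def Em.rh_def Em.N_def \<rho>_def Nn_def by simp
      then show ?thesis unfolding qw_def quot_weight_def by simp
    next
      case False then show ?thesis unfolding Em.lam_def Em.kap_def using qn by simp
    qed
  qed
  have term_le: "Em.lam i j * F (t i) (t j) \<le> qw i j * W (g i) (g j) + qw j i * W (g j) (g i)"
    if ij: "i < k" "j < k" for i j
  proof -
    have "F (t i) (t j) \<le> 1 * (G (t i) (t j) + G (t j) (t i))"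
      unfolding F_def using gw01 Gb by (intro mult_right_mono) auto
    also have "\<dots> = W (g i) (g j) + W (g j) (g i)" unfolding G_def g_def using ij by simp
    finally have Fl: "F (t i) (t j) \<le> W (g i) (g j) + W (g j) (g i)" .
    have "Em.lam i j * F (t i) (t j) \<le> qw i j * (W (g i) (g j) + W (g j) (g i))"
      using lam_le Fl Fb W qn by (intro mult_mono) (auto intro: add_nonneg_nonneg)
    then show ?thesis using qsym[of i j] by (simp add: algebra_simps)
  qed
  have Rz_le: "(\<Sum>j<k. \<Sum>i<j. Em.lam i j * F (t i) (t j)) \<le> opt {..<k} qw {..<m} W"
  proof -
    have "(\<Sum>j<k. \<Sum>i<j. Em.lam i j * F (t i) (t j))
        \<le> (\<Sum>j<k. \<Sum>i<j. qw i j * W (g i) (g j) + qw j i * W (g j) (g i))"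
      by (intro sum_mono term_le) auto
    also have "\<dots> \<le> (\<Sum>i<k. qw i i * W (g i) (g i)) + (\<Sum>j<k. \<Sum>i<j. qw i j * W (g i) (g j) + qw j i * W (g j) (g i))"
      using qn W by (simp add: sum_nonneg)
    also have "\<dots> = (\<Sum>i<k. \<Sum>j<k. qw i j * W (g i) (g j))"
      by (rule sum_square_split[symmetric])
    also have "\<dots> \<le> opt {..<k} qw {..<m} W" by (rule opt_ge[OF _ _ gm]) auto
    finally show ?thesis .
  qed
  define pg where "pg i j = (\<Sum>u\<in>P i. \<Sum>v\<in>P j. gw E u v * G u v)" for i j
  define pf where "pf i j = (\<Sum>u\<in>P i. \<Sum>v\<in>P j. F u v)" for i j
  have S_eq: "(\<Sum>u\<in>V. \<Sum>v\<in>V. gw E u v * W (h u) (h v)) = (\<Sum>i<k. \<Sum>j<k. pg i j)"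
  proof -
    have "(\<Sum>u\<in>V. \<Sum>v\<in>V. gw E u v * W (h u) (h v)) = (\<Sum>u\<in>V. \<Sum>v\<in>V. gw E u v * G u v)"
      unfolding G_def h'_def by (intro sum.cong refl) auto
    also have "\<dots> = (\<Sum>i<k. \<Sum>u\<in>P i. \<Sum>j<k. \<Sum>v\<in>P j. gw E u v * G u v)"
      by (simp add: partition_sum[OF rp V])
    also have "\<dots> = (\<Sum>i<k. \<Sum>j<k. pg i j)"
      unfolding pg_def by (intro sum.cong refl sum.swap)
    finally show ?thesis .
  qed
  have pf_eq: "pg i j + pg j i = pf i j" for i j
  proof -
    have "pg j i = (\<Sum>u\<in>P i. \<Sum>v\<in>P j. gw E v u * G v u)" unfolding pg_def by (rule sum.swap)
    also have "\<dots> = (\<Sum>u\<in>P i. \<Sum>v\<in>P j. gw E u v * G v u)"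
      unfolding gw_def using Esym by (intro sum.cong refl) auto
    finally show ?thesis unfolding pg_def pf_def F_def by (simp add: sum.distrib[symmetric] algebra_simps)
  qed
  have S2: "(\<Sum>u\<in>V. \<Sum>v\<in>V. gw E u v * W (h u) (h v)) = (\<Sum>i<k. pg i i) + (\<Sum>j<k. \<Sum>i<j. pf i j)"
    unfolding S_eq sum_square_split pf_eq ..
  have diag: "(\<Sum>i<k. pg i i) \<le> M * real (card V)^2 / real k"
  proof -
    have "pg i i \<le> M * wset E (P i) (P i)" for i
    proof -
      have "pg i i \<le> (\<Sum>u\<in>P i. \<Sum>v\<in>P i. gw E u v * M)" unfolding pg_def
        using gw01 Gb by (intro sum_mono mult_left_mono) auto
      then show ?thesis unfolding wset_def by (simp add: sum_distrib_left sum_distrib_right mult.commute)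
    qed
    then have "(\<Sum>i<k. pg i i) \<le> (\<Sum>i<k. M * wset E (P i) (P i))" by (intro sum_mono)
    also have "\<dots> = M * (\<Sum>i<k. wset E (P i) (P i))" by (simp add: sum_distrib_left)
    also have "\<dots> \<le> M * (real (card V)^2 / real k)" using diag_total[OF rp V _ irr] k20 M0 by (intro mult_left_mono) auto
    finally show ?thesis by simp
  qed
  have off: "pf i j \<le> (if Hr i j then pf i j else 0) + 2 * M * \<tau> * (Nn i * Nn j)" if ij: "i < j" "j < k" for i j
  proof (cases "Hr i j")
    case True then show ?thesis using M0 kpos unfolding \<tau>_def Nn_def by simp
  next
    case False
    then have rl: "\<rho> i j < \<tau>" unfolding Hr_def using ij by auto
    have "pf i j \<le> (\<Sum>u\<in>P i. \<Sum>v\<in>P j. gw E u v * (2 * M))" unfolding pf_def F_def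
    proof (intro sum_mono mult_left_mono)
      fix u v
      show "G u v + G v u \<le> 2 * M" using Gb[of u v] Gb[of v u] by linarith
    qed (use gw01 in auto)
    also have "\<dots> = 2 * M * wset E (P i) (P j)" unfolding wset_def by (simp add: sum_distrib_left sum_distrib_right mult.commute)
    also have "wset E (P i) (P j) \<le> \<tau> * (Nn i * Nn j)"
    proof (cases "Nn i * Nn j = 0")
      case True
      then have "wset E (P i) (P j) \<le> 0" using wset_le[of "P i" "P j" E] finP ij unfolding Nn_def by auto
      then show ?thesis using True by (simp only: mult_zero_right) 
    next
      case False
      then have p: "Nn i * Nn j > 0" unfolding Nn_def by (simp add: zero_less_mult_iff)
      have "Nn i \<noteq> 0" "Nn j \<noteq> 0" using p by auto
      then have "wset E (P i) (P j) = \<rho> i j * (Nn i * Nn j)" unfolding \<rho>_def by simp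
      also have "\<dots> \<le> \<tau> * (Nn i * Nn j)" using rl p by (intro mult_right_mono) auto
      finally show ?thesis .
    qed
    then have "2 * M * wset E (P i) (P j) \<le> 2 * M * (\<tau> * (Nn i * Nn j))" using M0 by (intro mult_left_mono) auto
    finally show ?thesis using False by simp
  qed
  have NN: "(\<Sum>j<k. \<Sum>i<j. Nn i * Nn j) \<le> real (card V)^2 / 2"
  proof -
    have "real (card V) = (\<Sum>i<k. Nn i)" unfolding Nn_def using partition_sum[OF rp V, of "\<lambda>_. 1::real"] by simp
    then have "real (card V)^2 = (\<Sum>i<k. \<Sum>j<k. Nn i * Nn j)" by (simp add: power2_eq_square sum_product)
    also have "\<dots> = (\<Sum>i<k. Nn i * Nn i) + (\<Sum>j<k. \<Sum>i<j. Nn i * Nn j + Nn j * Nn i)" by (rule sum_square_split)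
    also have "(\<Sum>j<k. \<Sum>i<j. Nn i * Nn j + Nn j * Nn i) = 2 * (\<Sum>j<k. \<Sum>i<j. Nn i * Nn j)"
      by (simp add: sum_distrib_left mult.commute)
    finally have "real (card V)^2 = (\<Sum>i<k. Nn i * Nn i) + 2 * (\<Sum>j<k. \<Sum>i<j. Nn i * Nn j)" .
    moreover have "(\<Sum>i<k. Nn i * Nn i) \<ge> 0" unfolding Nn_def by (intro sum_nonneg) auto
    ultimately show ?thesis by simp
  qed
  have offsum: "(\<Sum>j<k. \<Sum>i<j. pf i j) \<le> (\<Sum>j<k. \<Sum>i<j. if Hr i j then pf i j else 0) + M * \<tau> * real (card V)^2"
  proof -
    have "(\<Sum>j<k. \<Sum>i<j. pf i j) \<le> (\<Sum>j<k. \<Sum>i<j. (if Hr i j then pf i j else 0) + 2 * M * \<tau> * (Nn i * Nn j))"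
      by (intro sum_mono off) auto
    also have "\<dots> = (\<Sum>j<k. \<Sum>i<j. if Hr i j then pf i j else 0) + 2 * M * \<tau> * (\<Sum>j<k. \<Sum>i<j. Nn i * Nn j)"
      by (simp add: sum.distrib sum_distrib_left)
    also have "2 * M * \<tau> * (\<Sum>j<k. \<Sum>i<j. Nn i * Nn j) \<le> 2 * M * \<tau> * (real (card V)^2 / 2)"
      using NN M0 kpos unfolding \<tau>_def by (intro mult_left_mono) auto
    finally show ?thesis by simp
  qed
  have tri: "(\<Sum>j<k. \<Sum>i<j. if Hr i j then pf i j else 0) = (\<Sum>i<k. \<Sum>j\<in>{i<..<k}. if Hr i j then pf i j else 0)"
    by (rule sum_tri_swap[symmetric])
  have errb: "k * (2 * M * Em.n^2 * (8 * \<gamma> / \<tau> + 6 * \<beta>)) \<le> M * real (card V)^2 / (4 * real k)"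
  proof -
    have a: "8 * \<gamma> / \<tau> = 1 / (16 * real k^2)" unfolding \<gamma>_def \<tau>_def using kpos
      by (simp add: field_simps power2_eq_square power3_eq_cube)
    have b: "6 * \<beta> \<le> 1 / (16 * real k^2)" using pr2 by (simp add: field_simps)
    have "k * (2 * M * Em.n^2 * (8 * \<gamma> / \<tau> + 6 * \<beta>)) \<le> k * (2 * M * Em.n^2 * (1 / (16 * real k^2) + 1 / (16 * real k^2)))"
      using a b M0 by (intro mult_left_mono) auto
    also have "\<dots> = M * real (card V)^2 / (4 * real k)" unfolding Nsum using kpos
      by (simp add: field_simps power2_eq_square)
    finally show ?thesis .
  qed
  have tauv: "M * \<tau> * real (card V)^2 = M * real (card V)^2 / (4 * real k)" unfolding \<tau>_def by simp
  have fin: "M * real (card V)^2 / real k + M * real (card V)^2 / (4 * real k) + M * real (card V)^2 / (4 * real k)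
      = 3/2 * M * real (card V)^2 / real k" using kpos by (simp add: field_simps)
  have main: "(\<Sum>u\<in>V. \<Sum>v\<in>V. gw E u v * W (h u) (h v))
     \<le> opt {..<k} qw {..<m} W + (M * real (card V)^2 / real k + M * real (card V)^2 / (4 * real k) + M * real (card V)^2 / (4 * real k))"
    using S2 diag offsum tri t Rz_le errb tauv unfolding pf_def by linarith
  show ?thesis using main fin unfolding qw_def by simp
qed

lemma lndist_le:
  fixes a b e :: real
  assumes "0 \<le> b" "b \<le> a" "a \<le> (1 + e) * b" "0 \<le> e"
  shows "lndist a b \<le> ereal e"
proof (cases "b = 0")
  case True
  then have "a = 0" using assms by simp
  then show ?thesis using True assms unfolding lndist_def by simp
next
  case False
  then have bp: "b > 0" using assms by simp
  then have ap: "a > 0" using assms by simp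
  have "ln a \<le> ln ((1 + e) * b)" using ap assms by simp
  also have "\<dots> = ln (1 + e) + ln b" using bp assms by (simp add: ln_mult)
  also have "ln (1 + e) \<le> e" using assms(4) by (simp add: ln_add_one_self_le_self)
  finally have "ln a - ln b \<le> e" by simp
  moreover have "ln b \<le> ln a" using ap bp assms by simp
  ultimately have "\<bar>ln a - ln b\<bar> \<le> e" by simp
  then show ?thesis using ap bp unfolding lndist_def by simp
qed

theorem theorem36:
  fixes V :: "'a set" and E :: "'a \<Rightarrow> 'a \<Rightarrow> bool" and n k :: nat
    and P :: "nat \<Rightarrow> 'a set" and \<epsilon> \<epsilon>\<^sub>0 c :: real
  assumes "is_graph V E"
    and "card V = n"
    and "c = real (num_edges V E) / real n ^ 2"
    and "0 < \<epsilon>\<^sub>0" and "\<epsilon>\<^sub>0 < 1"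
    and "0 < k"
    and "regular_partition V E k \<epsilon> P"
    and "1 / real k \<le> c / 10 * (\<epsilon>\<^sub>0 / (1 + \<epsilon>\<^sub>0))"
    and "\<epsilon> \<le> (1 / real k) ^ (8 * k ^ 2)"
  shows "d_opt V (gw E) {..<k} (quot_weight E P) \<le> ereal \<epsilon>\<^sub>0"
proof -
  note gr = assms(1) and cV = assms(2) and cdef = assms(3) and e0 = assms(4) and e1 = assms(5)
    and kpos = assms(6) and rp = assms(7) and kc = assms(8) and epsb = assms(9)
  have V: "finite V" and Esym: "\<And>u v. E u v \<Longrightarrow> E v u" and irr: "\<And>u. \<not> E u u"
    using gr unfolding is_graph_def by auto
  have kr: "real k > 0" using kpos by simp
  have Dpos: "1 / real k > 0" using kr by simp
  have npos: "n > 0"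
  proof (rule ccontr)
    assume "\<not> n > 0"
    then have "c = 0" using cdef by simp
    then show False using kc Dpos by simp
  qed
  have nr: "real n > 0" using npos by simp
  have c_le: "c \<le> 1"
  proof -
    have "real (num_edges V E) \<le> wset E V V" by (rule num_edges_le[OF V])
    also have "\<dots> \<le> real n * real n" using wset_le[OF V V, of E] cV by simp
    finally show ?thesis unfolding cdef using nr by (simp add: power2_eq_square divide_le_eq)
  qed
  have eh: "\<epsilon>\<^sub>0 / (1 + \<epsilon>\<^sub>0) \<le> 1 / 2" using e0 e1 by (simp add: field_simps)
  have k20: "k \<ge> 20"
  proof -
    have "c / 10 * (\<epsilon>\<^sub>0 / (1 + \<epsilon>\<^sub>0)) \<le> 1 / 10 * (1 / 2)"
      using c_le eh e0 by (intro mult_mono) auto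
    then have A: "1 / real k \<le> 1 / 20" using kc by linarith
    have "real k \<ge> 20"
    proof (rule ccontr)
      assume "\<not> real k \<ge> 20"
      then have "1 / 20 < 1 / real k" using kr by (intro divide_strict_left_mono) auto
      then show False using A by linarith
    qed
    then show ?thesis by simp
  qed
  have k2: "k \<ge> 2" using k20 by simp
  define qw where "qw = quot_weight E P"
  have qn: "\<And>i j. qw i j \<ge> 0" unfolding qw_def quot_weight_def by (rule wset_nonneg)
  have per_C: "lndist (opt V (gw E) {..<m} w) (opt {..<k} qw {..<m} w) \<le> ereal \<epsilon>\<^sub>0"
    if m: "m \<ge> 1" and w: "\<And>a b. w a b \<ge> 0" for m :: nat and w :: "nat \<Rightarrow> nat \<Rightarrow> real"
  proof -
    let ?a = "opt V (gw E) {..<m} w" and ?b = "opt {..<k} qw {..<m} w"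
    have mne: "{..<m} \<noteq> {}" using m by (auto simp: lessThan_empty_iff)
    have b0: "?b \<ge> 0" by (rule opt_nonneg) (use mne qn w in auto)
    have ba: "?b \<le> ?a"
    proof -
      obtain g where g: "g \<in> {..<k} \<rightarrow>\<^sub>E {..<m}" "?b = (\<Sum>i<k. \<Sum>j<k. qw i j * w (g i) (g j))"
        using opt_attained[of "{..<k}" "{..<m}" qw w] mne by auto
      obtain h where h: "h \<in> V \<rightarrow>\<^sub>E {..<m}"
        "(\<Sum>u\<in>V. \<Sum>v\<in>V. gw E u v * w (h u) (h v)) = (\<Sum>i<k. \<Sum>j<k. quot_weight E P i j * w (g i) (g j))"
        using quot_le_orig[OF rp V g(1)] by blast
      have "(\<Sum>u\<in>V. \<Sum>v\<in>V. gw E u v * w (h u) (h v)) \<le> ?a" by (rule opt_ge[OF V _ h(1)]) simp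
      then show ?thesis using g h unfolding qw_def by simp
    qed
    define M where "M = Max ((\<lambda>p. w (fst p) (snd p)) ` ({..<m} \<times> {..<m}))"
    have finM: "finite ((\<lambda>p. w (fst p) (snd p)) ` ({..<m} \<times> {..<m}))" by simp
    have neM: "(\<lambda>p. w (fst p) (snd p)) ` ({..<m} \<times> {..<m}) \<noteq> {}" using mne by simp
    have WM: "\<And>a b. a < m \<Longrightarrow> b < m \<Longrightarrow> w a b \<le> M"
      unfolding M_def by (rule Max_ge[OF finM]) force
    obtain a0 b0 where ab: "a0 < m" "b0 < m" "w a0 b0 = M"
      using Max_in[OF finM neM] unfolding M_def by auto
    have M0: "M \<ge> 0" using w ab by metis
    obtain h where h: "h \<in> V \<rightarrow>\<^sub>E {..<m}" "?a = (\<Sum>u\<in>V. \<Sum>v\<in>V. gw E u v * w (h u) (h v))"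
      using opt_attained[OF V _ mne, of "gw E" w] by auto
    have up: "?a \<le> ?b + 3/2 * M * real n^2 / real k"
      using upper[OF gr rp k20 epsb m w WM h(1)] h(2) cV unfolding qw_def by simp
    have lowb: "?b \<ge> M / 4 * (\<Sum>i<k. \<Sum>j\<in>{..<k} - {i}. qw i j)"
    proof -
      have "opt {..<k} qw {..<m} w \<ge> w a0 b0 / 4 * (\<Sum>i<k. \<Sum>j\<in>{..<k} - {i}. qw i j)"
        by (rule cut_lower[OF k2 ab(1) ab(2)]) (use w qn in auto)
      then show ?thesis using ab(3) by simp
    qed
    have sumq: "(\<Sum>i<k. \<Sum>j\<in>{..<k} - {i}. qw i j) \<ge> c * real n^2 - real n^2 / real k"
    proof -
      have "wset E V V = (\<Sum>i<k. \<Sum>u\<in>P i. \<Sum>j<k. \<Sum>v\<in>P j. gw E u v)"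
        unfolding wset_def by (simp only: partition_sum[OF rp V])
      also have "\<dots> = (\<Sum>i<k. \<Sum>j<k. \<Sum>u\<in>P i. \<Sum>v\<in>P j. gw E u v)"
        by (intro sum.cong refl sum.swap)
      finally have "(\<Sum>i<k. \<Sum>j<k. qw i j) = wset E V V"
        unfolding qw_def quot_weight_def wset_def by simp
      moreover have "(\<Sum>i<k. \<Sum>j<k. qw i j) = (\<Sum>i<k. qw i i) + (\<Sum>i<k. \<Sum>j\<in>{..<k} - {i}. qw i j)"
      proof -
        have "(\<Sum>j<k. qw i j) = qw i i + (\<Sum>j\<in>{..<k} - {i}. qw i j)" if "i < k" for i
          using that by (simp add: sum.remove)
        then show ?thesis by (simp add: sum.distrib)
      qed
      moreover have "(\<Sum>i<k. qw i i) \<le> real n^2 / real k"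
        using diag_total[OF rp V kpos irr] cV unfolding qw_def quot_weight_def by simp
      moreover have "wset E V V \<ge> c * real n^2"
        using num_edges_le[OF V, of E] cdef nr by simp
      ultimately show ?thesis by linarith
    qed
    have key: "3/2 * M * real n^2 / real k \<le> \<epsilon>\<^sub>0 * (M / 4 * (c * real n^2 - real n^2 / real k))"
    proof -
      define D where "D = 1 / real k"
      have D: "D \<le> c * \<epsilon>\<^sub>0 / (10 * (1 + \<epsilon>\<^sub>0))" using kc unfolding D_def by simp
      have "D * (6 + \<epsilon>\<^sub>0) \<le> c * \<epsilon>\<^sub>0 / (10 * (1 + \<epsilon>\<^sub>0)) * (6 + \<epsilon>\<^sub>0)" using D e0 by (intro mult_right_mono) auto
      also have "\<dots> \<le> c * \<epsilon>\<^sub>0"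
      proof -
        have cp: "c \<ge> 0" using cdef by simp
        have "(6 + \<epsilon>\<^sub>0) / (10 * (1 + \<epsilon>\<^sub>0)) \<le> 1" using e0 by simp
        then have "c * \<epsilon>\<^sub>0 * ((6 + \<epsilon>\<^sub>0) / (10 * (1 + \<epsilon>\<^sub>0))) \<le> c * \<epsilon>\<^sub>0 * 1"
          using cp e0 by (intro mult_left_mono) auto
        then show ?thesis by simp
      qed
      finally have "D * (6 + \<epsilon>\<^sub>0) \<le> c * \<epsilon>\<^sub>0" .
      then have "6 * D \<le> \<epsilon>\<^sub>0 * (c - D)" by (simp add: algebra_simps)
      then have "(M * real n^2 / 4) * (6 * D) \<le> (M * real n^2 / 4) * (\<epsilon>\<^sub>0 * (c - D))"
        using M0 by (intro mult_left_mono) auto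
      then show ?thesis unfolding D_def by (simp add: algebra_simps)
    qed
    have "?a \<le> (1 + \<epsilon>\<^sub>0) * ?b"
    proof -
      have "M / 4 * (c * real n^2 - real n^2 / real k) \<le> M / 4 * (\<Sum>i<k. \<Sum>j\<in>{..<k} - {i}. qw i j)"
        using sumq M0 by (intro mult_left_mono) auto
      then have "M / 4 * (c * real n^2 - real n^2 / real k) \<le> ?b" using lowb by linarith
      then have "\<epsilon>\<^sub>0 * (M / 4 * (c * real n^2 - real n^2 / real k)) \<le> \<epsilon>\<^sub>0 * ?b"
        using e0 by (intro mult_left_mono) auto
      moreover have "(1 + \<epsilon>\<^sub>0) * ?b = ?b + \<epsilon>\<^sub>0 * ?b" by (simp add: algebra_simps)
      ultimately show ?thesis using up key by linarith
    qed
    then show ?thesis by (rule lndist_le[OF b0 ba _ ]) (use e0 in simp)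
  qed
  show ?thesis
    unfolding d_opt_def
  proof (rule SUP_least)
    fix C :: "nat \<times> (nat \<Rightarrow> nat \<Rightarrow> real)" assume C: "C \<in> {(m, w). (m::nat) \<ge> 1 \<and> (\<forall>u v. w u v \<in> \<rat> \<and> w u v \<ge> (0::real))}"
    obtain m w where Cmw: "C = (m, w)" by force
    then have "m \<ge> 1" "\<And>a b. w a b \<ge> 0" using C by auto
    from per_C[OF this] show "lndist (opt V (gw E) {..<fst C} (snd C)) (opt {..<k} (quot_weight E P) {..<fst C} (snd C)) \<le> ereal \<epsilon>\<^sub>0"
      unfolding Cmw qw_def by simp
  qed
qed


end
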